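(* Assume $\Sigma$ is already in a special coordinate basis (SCB) as in the context, with state $x=(x_a,x_b,x_c,x_d)$. Then there exists a nonsingular matrix $T_d\in\mathbb R^{n_d\times n_d}$ such that, with $T_s=\mathrm{diag}(I_{n_a},I_{n_b},I_{n_c},T_d)$ and the state transformation $x=T_s\bar x$, the transformed system is again in SCB (with the same $C_d$, $B_d$, $q_1,\dots,q_{m_d}$) and its matrix $F_{dd}$ has the following structure: partitioning the columns of $F_{dd}$ into consecutive blocks of widths $q_1,\dots,q_{m_d}$ and denoting by $f_{i,j,k}$ the entry of row $i$ in the $k$-th column of block $j$, one has $f_{i,j,k}=0$ whenever $j\ge i$ or $k=1$. Moreover, $C_dT_d=C_d$ and $T_d^{-1}B_d=B_d$.
   Context: Notation: for an integer $k\ge 1$, $J_k\in\mathbb R^{k\times k}$ is the matrix with ones on the first superdiagonal and zeros elsewhere, $B_k=[0\ \cdots\ 0\ 1]^\top\in\mathbb R^{k}$, $C_k=[1\ 0\ \cdots\ 0]\in\mathbb R^{1\times k}$, and $\mathrm{diag}(\cdot)$ denotes a (block) diagonal matrix. Consider the linear time-invariant system $\Sigma$: $\dot x=Ax+Bu$, $y=Cx+Du$, with $x\in\mathbb R^n$, $u\in\mathbb R^m$, $y\in\mathbb R^p$, $\operatorname{rank}D=m_0$, and with $[B^\top\ D^\top]$ and $[C\ D]$ of full rank. Special coordinate basis (SCB): $\Sigma$ is in SCB if its state, input and output are partitioned as $x=(x_a,x_b,x_c,x_d)$ with $x_a\in\mathbb R^{n_a},x_b\in\mathbb R^{n_b},x_c\in\mathbb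 R^{n_c},x_d\in\mathbb R^{n_d}$, $u=(u_0,u_d,u_c)$ with $u_0\in\mathbb R^{m_0},u_d\in\mathbb R^{m_d},u_c\in\mathbb R^{m_c}$, $y=(y_0,y_d,y_b)$ with $y_0\in\mathbb R^{m_0},y_d\in\mathbb R^{m_d},y_b\in\mathbb R^{p_b}$, such that $y_0=C_{0a}x_a+C_{0b}x_b+C_{0c}x_c+C_{0d}x_d+u_0$, $y_d=C_dx_d$, $y_b=C_bx_b$, $\dot x_a=A_ax_a+H_{ab}C_bx_b+H_{ad}C_dx_d+B_{0a}y_0$, $\dot x_b=A_bx_b+H_{bd}C_dx_d+B_{0b}y_0$, $\dot x_c=B_cF_{ca}x_a+H_{cb}C_bx_b+A_cx_c+H_{cd}C_dx_d+B_{0c}y_0+B_cu_c$, $\dot x_d=B_dF_{da}x_a+B_dF_{db}x_b+B_dF_{dc}x_c+A_dx_d+B_{0d}y_0+B_du_d$, with constant real matrices of appropriate dimensions, where $A_b=\mathrm{diag}(J_{l_1},\dots,J_{l_{p_b}})+H_{bb}C_b$, $C_b=\mathrm{diag}(C_{l_1},\dots,C_{l_{p_b}})$ for positive integers $l_i$ with $\sum_i l_i=n_b$; $B_d=\mathrm{diag}(B_{q_1},\dots,B_{q_{m_d}})$, $C_d=\mathrm{diag}(C_{q_1},\dots,C_{q_{m_d}})$ for integers $q_1\ge q_2\ge\dots\ge q_{m_d}\ge 1$ with $\sum_i q_i=n_d$; and $A_d=A_d^\star+B_dF_{dd}+H_{dd}C_d$ with $A_d^\star=\mathrm{diag}(J_{q_1},\dots,J_{q_{m_d}})$,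 $F_{dd}\in\mathbb R^{m_d\times n_d}$, $H_{dd}\in\mathbb R^{n_d\times m_d}$. *)

theory Defs
  imports "Jordan_Normal_Form.Matrix" "Jordan_Normal_Form.DL_Rank"
begin

definition J_blk :: "nat \<Rightarrow> real mat" where
  "J_blk k = mat k k (\<lambda>(i,j). if j = Suc i then 1 else 0)"

definition B_blk :: "nat \<Rightarrow> real mat" where
  "B_blk k = mat k 1 (\<lambda>(i,j). if i = k - 1 then 1 else 0)"

definition C_blk :: "nat \<Rightarrow> real mat" where
  "C_blk k = mat 1 k (\<lambda>(i,j). if j = 0 then 1 else 0)"

definition Jdiag :: "nat list \<Rightarrow> real mat" where
  "Jdiag ks = diag_block_mat (map J_blk ks)"

definition Bdiag :: "nat list \<Rightarrow> real mat" where
  "Bdiag ks = diag_block_mat (map B_blk ks)"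

definition Cdiag :: "nat list \<Rightarrow> real mat" where
  "Cdiag ks = diag_block_mat (map C_blk ks)"

definition mat_rank :: "real mat \<Rightarrow> nat" where
  "mat_rank M = vec_space.rank (dim_row M) M"

definition full_rank :: "real mat \<Rightarrow> bool" where
  "full_rank M \<longleftrightarrow> mat_rank M = min (dim_row M) (dim_col M)"

text \<open>The system (A,B,C,D) is in special coordinate basis with block sizes
  na, nb, nc, nd (state), m0, md, mc (input u = (u0,ud,uc)), m0, md, pb
  (output y = (y0,yd,yb)), chain lengths ls = [l_1,...,l_pb] and
  qs = [q_1,...,q_md], and with the given matrix Fdd in the decomposition
  A_d = A_d^* + B_d Fdd + H_dd C_d.\<close>

definition is_SCB ::
  "real mat \<Rightarrow> real mat \<Rightarrow> real mat \<Rightarrow> real mat \<Rightarrow>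
   nat \<Rightarrow> nat \<Rightarrow> nat \<Rightarrow> nat \<Rightarrow> nat \<Rightarrow> nat \<Rightarrow> nat \<Rightarrow> nat \<Rightarrow>
   nat list \<Rightarrow> nat list \<Rightarrow> real mat \<Rightarrow> bool" where
  "is_SCB A B C D na nb nc nd m0 md mc pb ls qs Fdd \<longleftrightarrow>
     length ls = pb \<and> (\<forall>l\<in>set ls. 1 \<le> l) \<and> sum_list ls = nb \<and>
     length qs = md \<and> sorted_wrt (\<ge>) qs \<and> (\<forall>q\<in>set qs. 1 \<le> q) \<and> sum_list qs = nd \<and>
     A \<in> carrier_mat (na+nb+nc+nd) (na+nb+nc+nd) \<and>
     B \<in> carrier_mat (na+nb+nc+nd) (m0+md+mc) \<and>
     C \<in> carrier_mat (m0+md+pb) (na+nb+nc+nd) \<and>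
     D \<in> carrier_mat (m0+md+pb) (m0+md+mc) \<and>
     Fdd \<in> carrier_mat md nd \<and>
     (\<exists>C0a C0b C0c C0d Aa Hab Had B0a Hbb Hbd B0b Fca Hcb Ac Hcd B0c Bc
        Fda Fdb Fdc Hdd B0d.
        C0a \<in> carrier_mat m0 na \<and> C0b \<in> carrier_mat m0 nb \<and>
        C0c \<in> carrier_mat m0 nc \<and> C0d \<in> carrier_mat m0 nd \<and>
        Aa \<in> carrier_mat na na \<and> Hab \<in> carrier_mat na pb \<and>
        Had \<in> carrier_mat na md \<and> B0a \<in> carrier_mat na m0 \<and>
        Hbb \<in> carrier_mat nb pb \<and> Hbd \<in> carrier_mat nb md \<and> B0b \<in> carrier_mat nb m0 \<and>
        Fca \<in> carrier_mat mc na \<and> Hcb \<in> carrier_mat nc pb \<and> Ac \<in> carrier_mat nc nc \<and>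
        Hcd \<in> carrier_mat nc md \<and> B0c \<in> carrier_mat nc m0 \<and> Bc \<in> carrier_mat nc mc \<and>
        Fda \<in> carrier_mat md na \<and> Fdb \<in> carrier_mat md nb \<and> Fdc \<in> carrier_mat md nc \<and>
        Hdd \<in> carrier_mat nd md \<and> B0d \<in> carrier_mat nd m0 \<and>
        (let Cb = Cdiag ls; Ab = Jdiag ls + Hbb * Cb;
             Bd = Bdiag qs; Cd = Cdiag qs; Ad = Jdiag qs + Bd * Fdd + Hdd * Cd in
         \<forall>xa \<in> carrier_vec na. \<forall>xb \<in> carrier_vec nb. \<forall>xc \<in> carrier_vec nc.
         \<forall>xd \<in> carrier_vec nd. \<forall>u0 \<in> carrier_vec m0. \<forall>ud \<in> carrier_vec md.
         \<forall>uc \<in> carrier_vec mc.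
           (let y0 = C0a *\<^sub>v xa + C0b *\<^sub>v xb + C0c *\<^sub>v xc + C0d *\<^sub>v xd + u0;
                x = xa @\<^sub>v xb @\<^sub>v xc @\<^sub>v xd;
                u = u0 @\<^sub>v ud @\<^sub>v uc in
            C *\<^sub>v x + D *\<^sub>v u = y0 @\<^sub>v (Cd *\<^sub>v xd) @\<^sub>v (Cb *\<^sub>v xb) \<and>
            A *\<^sub>v x + B *\<^sub>v u =
              (Aa *\<^sub>v xa + Hab *\<^sub>v (Cb *\<^sub>v xb) + Had *\<^sub>v (Cd *\<^sub>v xd) + B0a *\<^sub>v y0)
              @\<^sub>v (Ab *\<^sub>v xb + Hbd *\<^sub>v (Cd *\<^sub>v xd) + B0b *\<^sub>v y0)
              @\<^sub>v (Bc *\<^sub>v (Fca *\<^sub>v xa) + Hcb *\<^sub>v (Cb *\<^sub>v xb) + Ac *\<^sub>v xc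
                    + Hcd *\<^sub>v (Cd *\<^sub>v xd) + B0c *\<^sub>v y0 + Bc *\<^sub>v uc)
              @\<^sub>v (Bd *\<^sub>v (Fda *\<^sub>v xa) + Bd *\<^sub>v (Fdb *\<^sub>v xb) + Bd *\<^sub>v (Fdc *\<^sub>v xc)
                    + Ad *\<^sub>v xd + B0d *\<^sub>v y0 + Bd *\<^sub>v ud))))"

definition Fdd_structured :: "nat list \<Rightarrow> real mat \<Rightarrow> bool" where
  "Fdd_structured qs F \<longleftrightarrow>
     (\<forall>i < length qs. \<forall>j < length qs. \<forall>k < qs ! j.
        (i \<le> j \<or> k = 0) \<longrightarrow> F $$ (i, sum_list (take j qs) + k) = 0)"

end

theory Submission
  imports Defs
begin

definition ss :: "nat list \<Rightarrow> nat \<Rightarrow> nat" where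
  "ss qs j = sum_list (take j qs)"

fun blk :: "nat list \<Rightarrow> nat \<Rightarrow> nat" where
  "blk [] r = 0"
| "blk (q # qs) r = (if r < q then 0 else Suc (blk qs (r - q)))"

definition dst :: "nat list \<Rightarrow> nat \<Rightarrow> nat" where
  "dst qs r = ss qs (Suc (blk qs r)) - Suc r"

lemma ss_0[simp]: "ss qs 0 = 0" by (simp add: ss_def)
lemma ss_Cons_Suc[simp]: "ss (q # qs) (Suc j) = q + ss qs j" by (simp add: ss_def)

lemma ss_Suc: "j < length qs \<Longrightarrow> ss qs (Suc j) = ss qs j + qs ! j"
  by (simp add: ss_def take_Suc_conv_app_nth)

lemma ss_mono: "i \<le> j \<Longrightarrow> ss qs i \<le> ss qs j"
  unfolding ss_def
proof (induction qs arbitrary: i j)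
  case Nil then show ?case by simp
next
  case (Cons q qs) then show ?case
    by (cases i; cases j; auto)
qed

lemma ss_le_sum: "ss qs j \<le> sum_list qs"
  unfolding ss_def
proof (induction qs arbitrary: j)
  case Nil then show ?case by simp
next
  case (Cons q qs) then show ?case by (cases j; auto)
qed

lemma ss_len: "length qs \<le> j \<Longrightarrow> ss qs j = sum_list qs"
  by (simp add: ss_def)

lemma ss_strict: "\<forall>q\<in>set qs. 1 \<le> q \<Longrightarrow> i < j \<Longrightarrow> j \<le> length qs \<Longrightarrow> ss qs i < ss qs j"
proof (induction qs arbitrary: i j)
  case Nil then show ?case by simp
next
  case (Cons q qs)
  then obtain j' where j: "j = Suc j'" by (cases j) auto
  show ?case
  proof (cases i)
    case 0 then show ?thesis using Cons j by simp
  next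
    case (Suc i') then show ?thesis using Cons j by simp
  qed
qed

lemma ss_pos: "\<forall>q\<in>set qs. 1 \<le> q \<Longrightarrow> 0 < j \<Longrightarrow> j \<le> length qs \<Longrightarrow> 0 < ss qs j"
  using ss_strict[of qs 0 j] by simp

lemma blk_props: "r < sum_list qs \<Longrightarrow>
   blk qs r < length qs \<and> ss qs (blk qs r) \<le> r \<and> r < ss qs (Suc (blk qs r))"
proof (induction qs arbitrary: r)
  case Nil then show ?case by simp
next
  case (Cons q qs)
  show ?case
  proof (cases "r < q")
    case True then show ?thesis by simp
  next
    case False
    then have "r - q < sum_list qs" using Cons.prems by simp
    from Cons.IH[OF this] False show ?thesis by auto
  qed
qed

lemma blk_unique: "j < length qs \<Longrightarrow> ss qs j \<le> r \<Longrightarrow> r < ss qs (Suc j) \<Longrightarrow> blk qs r = j"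
proof (induction qs arbitrary: r j)
  case Nil then show ?case by simp
next
  case (Cons q qs)
  show ?case
  proof (cases j)
    case 0 then show ?thesis using Cons.prems by simp
  next
    case (Suc j')
    then have "\<not> r < q" "ss qs j' \<le> r - q" "r - q < ss qs (Suc j')" "j' < length qs"
      using Cons.prems by auto
    then show ?thesis using Cons.IH Suc by simp
  qed
qed


lemma sum_list_one[simp]: "(\<Sum>x\<leftarrow>qs. Suc 0) = length qs" by (induction qs) auto

lemma Cdiag_carrier: "Cdiag qs \<in> carrier_mat (length qs) (sum_list qs)"
  unfolding Cdiag_def carrier_mat_def by (simp add: dim_diag_block_mat o_def C_blk_def)
lemma Bdiag_carrier: "Bdiag qs \<in> carrier_mat (sum_list qs) (length qs)"
  unfolding Bdiag_def carrier_mat_def by (simp add: dim_diag_block_mat o_def B_blk_def)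
lemma Jdiag_carrier: "Jdiag qs \<in> carrier_mat (sum_list qs) (sum_list qs)"
  unfolding Jdiag_def carrier_mat_def by (simp add: dim_diag_block_mat o_def J_blk_def)

lemma Cdiag_Cons: "Cdiag (q # qs) = four_block_mat (C_blk q) (0\<^sub>m 1 (sum_list qs)) (0\<^sub>m (length qs) q) (Cdiag qs)"
  using Cdiag_carrier[of qs] unfolding Cdiag_def by (simp add: C_blk_def)
lemma Bdiag_Cons: "Bdiag (q # qs) = four_block_mat (B_blk q) (0\<^sub>m q (length qs)) (0\<^sub>m (sum_list qs) 1) (Bdiag qs)"
  using Bdiag_carrier[of qs] unfolding Bdiag_def by (simp add: B_blk_def)
lemma Jdiag_Cons: "Jdiag (q # qs) = four_block_mat (J_blk q) (0\<^sub>m q (sum_list qs)) (0\<^sub>m (sum_list qs) q) (Jdiag qs)"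
  using Jdiag_carrier[of qs] unfolding Jdiag_def by (simp add: J_blk_def)

lemma Cdiag_idx: "\<forall>q\<in>set qs. 1 \<le> q \<Longrightarrow> i < length qs \<Longrightarrow> c < sum_list qs \<Longrightarrow>
   Cdiag qs $$ (i, c) = (if c = ss qs i then 1 else 0)"
proof (induction qs arbitrary: i c)
  case Nil then show ?case by simp
next
  case (Cons q qs)
  show ?case
  proof (cases i)
    case 0 then show ?thesis using Cons.prems Cdiag_carrier[of qs]
      by (cases "c < q") (auto simp: Cdiag_Cons C_blk_def index_mat_four_block)
  next
    case (Suc i')
    have "0 < ss (q#qs) i" using ss_pos[of "q#qs" i] Cons.prems Suc by auto
    then show ?thesis using Cons.prems Cons.IH[of i' "c - q"] Cdiag_carrier[of qs] Suc
      by (cases "c < q") (auto simp: Cdiag_Cons C_blk_def index_mat_four_block)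
  qed
qed


lemma Bdiag_idx: "\<forall>q\<in>set qs. 1 \<le> q \<Longrightarrow> r < sum_list qs \<Longrightarrow> i < length qs \<Longrightarrow>
   Bdiag qs $$ (r, i) = (if Suc r = ss qs (Suc i) then 1 else 0)"
proof (induction qs arbitrary: i r)
  case Nil then show ?case by simp
next
  case (Cons q qs)
  show ?case
  proof (cases i)
    case 0 then show ?thesis using Cons.prems Bdiag_carrier[of qs]
      by (cases "r < q") (auto simp: Bdiag_Cons B_blk_def index_mat_four_block)
  next
    case (Suc i')
    have pos: "0 < ss qs i'" if "0 < i'" using ss_pos[of qs i'] Cons.prems Suc that by auto
    have "0 < ss qs (Suc i')" using ss_pos[of qs "Suc i'"] Cons.prems Suc by auto
    then show ?thesis using Cons.prems Cons.IH[of "r - q" i'] Bdiag_carrier[of qs] Suc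
      by (cases "r < q") (auto simp: Bdiag_Cons B_blk_def index_mat_four_block)
  qed
qed

lemma Jdiag_idx: "r < sum_list qs \<Longrightarrow> c < sum_list qs \<Longrightarrow>
   Jdiag qs $$ (r, c) = (if c = Suc r \<and> blk qs c = blk qs r then 1 else 0)"
proof (induction qs arbitrary: r c)
  case Nil then show ?case by simp
next
  case (Cons q qs)
  show ?case
    using Cons.prems Cons.IH[of "r - q" "c - q"] Jdiag_carrier[of qs]
    by (cases "r < q"; cases "c < q") (auto simp: Jdiag_Cons J_blk_def Suc_diff_le index_mat_four_block)
qed

locale qsl = fixes qs :: "nat list" assumes pos: "\<forall>q\<in>set qs. 1 \<le> q"
begin

abbreviation "nn \<equiv> sum_list qs"
abbreviation "mm \<equiv> length qs"
abbreviation "istop r \<equiv> Suc r = ss qs (Suc (blk qs r))"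
abbreviation "bl r \<equiv> blk qs r"
abbreviation "sq j \<equiv> ss qs j"

lemma qpos: "j < mm \<Longrightarrow> 1 \<le> qs ! j" using pos by auto

lemma blk_ss: "j < mm \<Longrightarrow> k < qs ! j \<Longrightarrow> bl (sq j + k) = j"
  by (rule blk_unique) (auto simp: ss_Suc)

lemma dst_ss: "j < mm \<Longrightarrow> k < qs ! j \<Longrightarrow> dst qs (sq j + k) = qs ! j - 1 - k"
  using blk_ss by (auto simp: dst_def ss_Suc)

lemma sqSuc_le: "j < mm \<Longrightarrow> sq (Suc j) \<le> nn"
  using ss_le_sum by blast

lemma sq_lt: "j < mm \<Longrightarrow> sq j < nn"
  using ss_Suc[of j qs] qpos[of j] sqSuc_le[of j] by simp

lemma sq_blk: "j < mm \<Longrightarrow> bl (sq j) = j"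
  using blk_ss[of j 0] qpos[of j] by simp

lemma top_props: "j < mm \<Longrightarrow> 0 < sq (Suc j) \<and> sq (Suc j) - 1 < nn \<and> bl (sq (Suc j) - 1) = j
   \<and> dst qs (sq (Suc j) - 1) = 0"
  using blk_ss[of j "qs!j - 1"] dst_ss[of j "qs!j - 1"] qpos[of j] ss_Suc[of j qs] sqSuc_le[of j]
  by auto

lemma r_props: "r < nn \<Longrightarrow> bl r < mm \<and> sq (bl r) \<le> r \<and> r < sq (Suc (bl r))
   \<and> dst qs r < qs ! (bl r) \<and> r + dst qs r + 1 = sq (Suc (bl r))"
  using blk_props[of r qs] ss_Suc[of "bl r" qs] by (auto simp: dst_def)

lemma istop_iff: "r < nn \<Longrightarrow> istop r \<longleftrightarrow> dst qs r = 0"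
  using r_props[of r] by (auto simp: dst_def)

lemma nontop: "r < nn \<Longrightarrow> \<not> istop r \<Longrightarrow>
   Suc r < nn \<and> bl (Suc r) = bl r \<and> dst qs r = Suc (dst qs (Suc r))"
proof -
  assume r: "r < nn" and nt: "\<not> istop r"
  from r_props[OF r] nt have lt: "Suc r < sq (Suc (bl r))" by auto
  have b: "bl (Suc r) = bl r" using r_props[OF r] lt by (intro blk_unique) auto
  moreover have "Suc r < nn" using lt sqSuc_le r_props[OF r] by (meson order_less_le_trans)
  ultimately show ?thesis using r_props[OF r] lt by (auto simp: dst_def)
qed

lemma prev_same: "c < nn \<Longrightarrow> c \<noteq> sq (bl c) \<Longrightarrow>
   0 < c \<and> bl (c - 1) = bl c \<and> dst qs (c - 1) = Suc (dst qs c) \<and> \<not> istop (c - 1)"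
proof -
  assume c: "c < nn" and ne: "c \<noteq> sq (bl c)"
  with r_props[OF c] have lt: "sq (bl c) < c" by auto
  then have c0: "0 < c" by auto
  have b: "bl (c - 1) = bl c" using r_props[OF c] lt by (intro blk_unique) auto
  then show ?thesis using c0 r_props[OF c] by (auto simp: dst_def)
qed

lemma start_prev: "c < nn \<Longrightarrow> c = sq (bl c) \<Longrightarrow> 0 < c \<Longrightarrow> istop (c - 1)"
proof -
  assume c: "c < nn" and e: "c = sq (bl c)" and c0: "0 < c"
  have b0: "0 < bl c" using e c0 by (cases "bl c") auto
  obtain j where j: "bl c = Suc j" using b0 by (cases "bl c") auto
  have jm: "j < mm" using r_props[OF c] j by auto
  have "bl (c - 1) = j"
    using e j c0 ss_Suc[OF jm] qpos[OF jm] by (intro blk_unique[OF jm]) auto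
  then show ?thesis using e j c0 by simp
qed

lemma B_iff: "r < nn \<Longrightarrow> i < mm \<Longrightarrow> Suc r = sq (Suc i) \<longleftrightarrow> istop r \<and> i = bl r"
proof
  assume r: "r < nn" and i: "i < mm" and e: "Suc r = sq (Suc i)"
  have "bl r = i" using e ss_Suc[of i qs] qpos[OF i] using i by (intro blk_unique[OF i]) auto
  then show "istop r \<and> i = bl r" using e by simp
qed auto

lemma B_eq: "r < nn \<Longrightarrow> i < mm \<Longrightarrow> Suc r = sq (Suc i) \<Longrightarrow> i = bl r"
  using B_iff by blast

lemma C_eq: "c < nn \<Longrightarrow> i < mm \<Longrightarrow> c = sq i \<Longrightarrow> i = bl c"
  using sq_blk by auto

lemma C_iff: "c < nn \<Longrightarrow> i < mm \<Longrightarrow> c = sq i \<longleftrightarrow> c = sq (bl c) \<and> i = bl c"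
  using sq_blk by auto

lemma J_iff: "r < nn \<Longrightarrow> c < nn \<Longrightarrow> (c = Suc r \<and> bl c = bl r) \<longleftrightarrow> (c = Suc r \<and> \<not> istop r)"
proof
  assume r: "r < nn" and c: "c < nn" and h: "c = Suc r \<and> bl c = bl r"
  show "c = Suc r \<and> \<not> istop r"
  proof (rule ccontr)
    assume "\<not> ?thesis"
    with h have "c = sq (Suc (bl c))" by metis
    with r_props[OF c] show False by simp
  qed
next
  assume "r < nn" "c < nn" "c = Suc r \<and> \<not> istop r"
  then show "c = Suc r \<and> bl c = bl r" using nontop by auto
qed

end

lemma sum_single: "finite S \<Longrightarrow> a \<in> S \<Longrightarrow> (\<And>k. k \<in> S \<Longrightarrow> k \<noteq> a \<Longrightarrow> f k = 0) \<Longrightarrow> sum f S = f a"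
  by (metis (mono_tags, lifting) sum.remove sum.neutral DiffE insertI1 add.right_neutral)

lemma sum_zero': "(\<And>k. k \<in> S \<Longrightarrow> f k = 0) \<Longrightarrow> sum f S = 0"
  by simp

context qsl begin

lemma CX: assumes X: "X \<in> carrier_mat nn k" and i: "i < mm" and c: "c < k"
  shows "(Cdiag qs * X) $$ (i, c) = X $$ (sq i, c)"
proof -
  have "(Cdiag qs * X) $$ (i, c) = (\<Sum>t\<in>{0..<nn}. Cdiag qs $$ (i,t) * X $$ (t, c))"
    using X i c Cdiag_carrier[of qs] by (auto simp: scalar_prod_def)
  also have "\<dots> = Cdiag qs $$ (i, sq i) * X $$ (sq i, c)"
    by (rule sum_single) (use sq_lt[OF i] i pos in \<open>auto simp: Cdiag_idx\<close>)
  finally show ?thesis using sq_lt[OF i] i pos by (simp add: Cdiag_idx)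
qed

lemma XB: assumes X: "X \<in> carrier_mat k nn" and i: "i < mm" and r: "r < k"
  shows "(X * Bdiag qs) $$ (r, i) = X $$ (r, sq (Suc i) - 1)"
proof -
  have t: "0 < sq (Suc i) \<and> sq (Suc i) - 1 < nn" using top_props[OF i] by auto
  have "(X * Bdiag qs) $$ (r, i) = (\<Sum>t\<in>{0..<nn}. X $$ (r,t) * Bdiag qs $$ (t, i))"
    using X i r Bdiag_carrier[of qs] by (auto simp: scalar_prod_def)
  also have "\<dots> = X $$ (r, sq (Suc i) - 1) * Bdiag qs $$ (sq (Suc i) - 1, i)"
    by (rule sum_single) (use t i pos in \<open>auto simp: Bdiag_idx\<close>)
  finally show ?thesis using t i pos by (simp add: Bdiag_idx)
qed

lemma BY: assumes Y: "Y \<in> carrier_mat mm k" and r: "r < nn" and c: "c < k"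
  shows "(Bdiag qs * Y) $$ (r, c) = (if istop r then Y $$ (bl r, c) else 0)"
proof -
  have "(Bdiag qs * Y) $$ (r, c) = (\<Sum>t\<in>{0..<mm}. Bdiag qs $$ (r,t) * Y $$ (t, c))"
    using Y r c Bdiag_carrier[of qs] by (auto simp: scalar_prod_def)
  also have "\<dots> = (if istop r then Y $$ (bl r, c) else 0)"
  proof (cases "istop r")
    case True
    have "(\<Sum>t\<in>{0..<mm}. Bdiag qs $$ (r,t) * Y $$ (t, c)) = Bdiag qs $$ (r,bl r) * Y $$ (bl r, c)"
      by (rule sum_single) (use r r_props[OF r] pos B_eq[OF r] in \<open>auto simp: Bdiag_idx\<close>)
    then show ?thesis using True r r_props[OF r] pos by (simp add: Bdiag_idx)
  next
    case False
    then show ?thesis using r pos B_eq[OF r] by (auto simp: Bdiag_idx intro!: sum.neutral)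
  qed
  finally show ?thesis .
qed

lemma YC: assumes Y: "Y \<in> carrier_mat k mm" and r: "r < k" and c: "c < nn"
  shows "(Y * Cdiag qs) $$ (r, c) = (if c = sq (bl c) then Y $$ (r, bl c) else 0)"
proof -
  have "(Y * Cdiag qs) $$ (r, c) = (\<Sum>t\<in>{0..<mm}. Y $$ (r,t) * Cdiag qs $$ (t, c))"
    using Y r c Cdiag_carrier[of qs] by (auto simp: scalar_prod_def)
  also have "\<dots> = (if c = sq (bl c) then Y $$ (r, bl c) else 0)"
  proof (cases "c = sq (bl c)")
    case True
    have "(\<Sum>t\<in>{0..<mm}. Y $$ (r,t) * Cdiag qs $$ (t, c)) = Y $$ (r, bl c) * Cdiag qs $$ (bl c, c)"
      by (rule sum_single) (use c r_props[OF c] pos C_eq[OF c] in \<open>auto simp: Cdiag_idx\<close>)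
    then show ?thesis using True c r_props[OF c] pos by (simp add: Cdiag_idx)
  next
    case False
    then show ?thesis using c pos C_eq[OF c] by (auto simp: Cdiag_idx intro!: sum.neutral)
  qed
  finally show ?thesis .
qed

lemma JX: assumes X: "X \<in> carrier_mat nn k" and r: "r < nn" and c: "c < k"
  shows "(Jdiag qs * X) $$ (r, c) = (if istop r then 0 else X $$ (Suc r, c))"
proof -
  have "(Jdiag qs * X) $$ (r, c) = (\<Sum>t\<in>{0..<nn}. Jdiag qs $$ (r,t) * X $$ (t, c))"
    using X r c Jdiag_carrier[of qs] by (auto simp: scalar_prod_def)
  also have "\<dots> = (if istop r then 0 else X $$ (Suc r, c))"
  proof (cases "istop r")
    case False
    have sr: "Suc r < nn" using nontop[OF r False] by auto
    have "(\<Sum>t\<in>{0..<nn}. Jdiag qs $$ (r,t) * X $$ (t, c)) = Jdiag qs $$ (r,Suc r) * X $$ (Suc r, c)"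
      by (rule sum_single) (use r sr in \<open>auto simp: Jdiag_idx\<close>)
    then show ?thesis using False r sr J_iff[OF r sr] by (simp add: Jdiag_idx)
  next
    case True
    have "Jdiag qs $$ (r, t) = 0" if t: "t < nn" for t
    proof -
      have "\<not> (t = Suc r \<and> bl t = bl r)" using J_iff[OF r t] True by blast
      then show ?thesis using t r by (simp add: Jdiag_idx)
    qed
    then show ?thesis using True by (auto intro!: sum.neutral)
  qed
  finally show ?thesis .
qed

lemma XJ: assumes X: "X \<in> carrier_mat k nn" and r: "r < k" and c: "c < nn"
  shows "(X * Jdiag qs) $$ (r, c) = (if c = sq (bl c) then 0 else X $$ (r, c - 1))"
proof -
  have "(X * Jdiag qs) $$ (r, c) = (\<Sum>t\<in>{0..<nn}. X $$ (r,t) * Jdiag qs $$ (t, c))"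
    using X r c Jdiag_carrier[of qs] by (auto simp: scalar_prod_def)
  also have "\<dots> = (if c = sq (bl c) then 0 else X $$ (r, c - 1))"
  proof (cases "c = sq (bl c)")
    case False
    note p = prev_same[OF c False]
    have sr: "c - 1 < nn" using c by auto
    have "(\<Sum>t\<in>{0..<nn}. X $$ (r,t) * Jdiag qs $$ (t, c)) = X $$ (r,c - 1) * Jdiag qs $$ (c - 1, c)"
      by (rule sum_single) (use c sr in \<open>auto simp: Jdiag_idx\<close>)
    then show ?thesis using False c sr p by (simp add: Jdiag_idx)
  next
    case True
    have "Jdiag qs $$ (t, c) = 0" if t: "t < nn" for t
    proof -
      have "\<not> (c = Suc t \<and> bl c = bl t)"
      proof
        assume h: "c = Suc t \<and> bl c = bl t"
        then have tc: "t = c - 1" and c0: "0 < c" by auto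
        have "istop (c - 1)" using start_prev[OF c True c0] .
        then have "istop t" using tc by simp
        with h J_iff[OF t c] show False by blast
      qed
      then show ?thesis using t c by (simp add: Jdiag_idx)
    qed
    then show ?thesis using True by (auto intro!: sum.neutral)
  qed
  finally show ?thesis .
qed

end

primrec bvec :: "nat list \<Rightarrow> real mat \<Rightarrow> nat \<Rightarrow> nat \<Rightarrow> real vec" where
  "bvec qs F j 0 = vec (sum_list qs) (\<lambda>r. if Suc r = ss qs (Suc j) then 1 else 0)"
| "bvec qs F j (Suc d) = vec (sum_list qs) (\<lambda>r.
     if Suc r = ss qs (Suc (blk qs r))
     then (if blk qs r \<le> j then row F (blk qs r) \<bullet> bvec qs F j d else 0)
     else bvec qs F j d $ Suc r)"

definition Td :: "nat list \<Rightarrow> real mat \<Rightarrow> real mat" where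
  "Td qs F = mat (sum_list qs) (sum_list qs) (\<lambda>(r,c). bvec qs F (blk qs c) (dst qs c) $ r)"

definition Fp :: "nat list \<Rightarrow> real mat \<Rightarrow> real mat" where
  "Fp qs F = mat (length qs) (sum_list qs) (\<lambda>(i,c).
     if blk qs c < i \<and> c \<noteq> ss qs (blk qs c) then (F * Td qs F) $$ (i,c) else 0)"

lemma bvec_dim[simp]: "dim_vec (bvec qs F j d) = sum_list qs"
  by (cases d) auto

lemma bvec_carrier[simp]: "bvec qs F j d \<in> carrier_vec (sum_list qs)"
  by (rule carrier_vecI) simp

lemma Td_carrier: "Td qs F \<in> carrier_mat (sum_list qs) (sum_list qs)"
  unfolding Td_def by (rule mat_carrier)

lemma Fp_carrier: "Fp qs F \<in> carrier_mat (length qs) (sum_list qs)"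
  unfolding Fp_def by (rule mat_carrier)

locale qsF = qsl + fixes F :: "real mat"
  assumes F: "F \<in> carrier_mat mm nn" and sorted: "sorted_wrt (\<ge>) qs"
begin

abbreviation "b \<equiv> bvec qs F"
abbreviation "T \<equiv> Td qs F"

lemma r0_props: "j < mm \<Longrightarrow> d < qs ! j \<Longrightarrow>
   sq (Suc j) - 1 - d < nn \<and> bl (sq (Suc j) - 1 - d) = j \<and> dst qs (sq (Suc j) - 1 - d) = d"
proof -
  assume j: "j < mm" and d: "d < qs ! j"
  have e: "sq (Suc j) - 1 - d = sq j + (qs ! j - 1 - d)" using ss_Suc[OF j] d by simp
  have k: "qs ! j - 1 - d < qs ! j" using qpos[OF j] by simp
  show ?thesis unfolding e using blk_ss[OF j k] dst_ss[OF j k] d sqSuc_le[OF j] ss_Suc[OF j]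
    by auto
qed

lemma supp: "j < mm \<Longrightarrow> d < qs ! j \<Longrightarrow>
   b j d $ (sq (Suc j) - 1 - d) = 1 \<and>
   (\<forall>r<nn. b j d $ r \<noteq> 0 \<longrightarrow> r = sq (Suc j) - 1 - d \<or> (bl r \<le> j \<and> dst qs r < d))"
proof (induction d)
  case 0
  note t = top_props[OF 0(1)]
  show ?case using t by auto
next
  case (Suc d)
  note j = Suc.prems(1)
  have IH: "b j d $ (sq (Suc j) - 1 - d) = 1 \<and>
   (\<forall>r<nn. b j d $ r \<noteq> 0 \<longrightarrow> r = sq (Suc j) - 1 - d \<or> (bl r \<le> j \<and> dst qs r < d))"
    using Suc by simp
  define r0 where "r0 = sq (Suc j) - 1 - Suc d"
  note p0 = r0_props[OF j Suc.prems(2), folded r0_def]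
  note p1 = r0_props[OF j, of d]
  have nt0: "\<not> istop r0" using istop_iff p0 by auto
  have sr0: "Suc r0 = sq (Suc j) - 1 - d" using ss_Suc[OF j] Suc.prems(2) unfolding r0_def by linarith
  have v0: "b j (Suc d) $ r0 = 1" using p0 nt0 sr0 IH by simp
  have "b j (Suc d) $ r \<noteq> 0 \<longrightarrow> r = r0 \<or> (bl r \<le> j \<and> dst qs r < Suc d)" if r: "r < nn" for r
  proof
    assume nz: "b j (Suc d) $ r \<noteq> 0"
    show "r = r0 \<or> (bl r \<le> j \<and> dst qs r < Suc d)"
    proof (cases "istop r")
      case True
      then show ?thesis using nz r istop_iff[OF r] by (auto split: if_splits)
    next
      case False
      note nt = nontop[OF r False]
      have "b j d $ Suc r \<noteq> 0" using nz r False by simp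
      then have "Suc r = sq (Suc j) - 1 - d \<or> (bl (Suc r) \<le> j \<and> dst qs (Suc r) < d)"
        using IH nt by blast
      then show ?thesis using nt sr0 by auto
    qed
  qed
  then show ?case using v0 unfolding r0_def by blast
qed

lemma T_idx: "r < nn \<Longrightarrow> c < nn \<Longrightarrow> T $$ (r, c) = b (bl c) (dst qs c) $ r"
  by (simp add: Td_def)

lemma supp_c: "c < nn \<Longrightarrow> b (bl c) (dst qs c) $ c = 1 \<and>
   (\<forall>r<nn. b (bl c) (dst qs c) $ r \<noteq> 0 \<longrightarrow> r = c \<or> (bl r \<le> bl c \<and> dst qs r < dst qs c))"
proof -
  assume c: "c < nn"
  have e: "sq (Suc (bl c)) - 1 - dst qs c = c" using r_props[OF c] by linarith
  have h1: "bl c < mm" and h2: "dst qs c < qs ! bl c" using r_props[OF c] by auto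
  show ?thesis using supp[OF h1 h2] unfolding e .
qed

lemma T_diag: assumes c: "c < nn" shows "T $$ (c, c) = 1"
proof -
  have "b (bl c) (dst qs c) $ c = 1" using supp_c[OF c] by blast
  then show ?thesis by (simp only: T_idx[OF c c])
qed

lemma T_off: assumes r: "r < nn" and c: "c < nn" and nz: "T $$ (r, c) \<noteq> 0" and ne: "r \<noteq> c"
  shows "bl r \<le> bl c \<and> dst qs r < dst qs c"
proof -
  have "b (bl c) (dst qs c) $ r \<noteq> 0" using nz T_idx[OF r c] by metis
  then show ?thesis using supp_c[OF c] r ne by blast
qed

end

context qsF begin

lemma sorted_le: "i \<le> j \<Longrightarrow> j < mm \<Longrightarrow> qs ! j \<le> qs ! i"
  using sorted sorted_wrt_nth_less[of "(\<ge>)" qs i j] by (cases "i = j") auto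

lemma CT: "Cdiag qs * T = Cdiag qs"
proof (rule eq_matI)
  show "dim_row (Cdiag qs * T) = dim_row (Cdiag qs)" by simp
  show "dim_col (Cdiag qs * T) = dim_col (Cdiag qs)" using Td_carrier[of qs F] Cdiag_carrier[of qs] by simp
  fix i c assume i': "i < dim_row (Cdiag qs)" and c': "c < dim_col (Cdiag qs)"
  have i: "i < mm" and c: "c < nn" using i' c' Cdiag_carrier[of qs] by auto
  have "(Cdiag qs * T) $$ (i,c) = T $$ (sq i, c)" by (rule CX[OF Td_carrier i c])
  also have "\<dots> = (if c = sq i then 1 else 0)"
  proof (cases "c = sq i")
    case True then show ?thesis using T_diag[OF c] by simp
  next
    case False
    have "T $$ (sq i, c) = 0"
    proof (rule ccontr)
      assume nz: "T $$ (sq i, c) \<noteq> 0"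
      from T_off[OF sq_lt[OF i] c nz] False
      have h: "bl (sq i) \<le> bl c" "dst qs (sq i) < dst qs c" by auto
      have b1: "bl (sq i) = i" by (rule sq_blk[OF i])
      have d1: "dst qs (sq i) = qs ! i - 1" using dst_ss[of i 0] qpos[OF i] i by simp
      have "dst qs c < qs ! bl c" using r_props[OF c] by simp
      moreover have "qs ! bl c \<le> qs ! i" using sorted_le[of i "bl c"] h b1 r_props[OF c] by simp
      ultimately show False using h d1 qpos[OF i] by simp
    qed
    then show ?thesis using False by simp
  qed
  also have "\<dots> = Cdiag qs $$ (i, c)" using Cdiag_idx[OF pos i c] by simp
  finally show "(Cdiag qs * T) $$ (i,c) = Cdiag qs $$ (i, c)" .
qed

lemma TB: "T * Bdiag qs = Bdiag qs"
proof (rule eq_matI)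
  show "dim_row (T * Bdiag qs) = dim_row (Bdiag qs)" using Td_carrier[of qs F] Bdiag_carrier[of qs] by simp
  show "dim_col (T * Bdiag qs) = dim_col (Bdiag qs)" by simp
  fix r i assume r': "r < dim_row (Bdiag qs)" and i': "i < dim_col (Bdiag qs)"
  have r: "r < nn" and i: "i < mm" using r' i' Bdiag_carrier[of qs] by auto
  note tp = top_props[OF i]
  have "(T * Bdiag qs) $$ (r, i) = T $$ (r, sq (Suc i) - 1)" by (rule XB[OF Td_carrier i r])
  also have "\<dots> = b i 0 $ r" using T_idx[OF r, of "sq (Suc i) - 1"] tp by simp
  also have "\<dots> = Bdiag qs $$ (r, i)" using Bdiag_idx[OF pos r i] r by simp
  finally show "(T * Bdiag qs) $$ (r, i) = Bdiag qs $$ (r, i)" .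
qed

lemma T_det: "det T \<noteq> 0"
proof
  assume "det T = 0"
  then obtain v where v: "v \<in> carrier_vec nn" "v \<noteq> 0\<^sub>v nn" "T *\<^sub>v v = 0\<^sub>v nn"
    using det_0_iff_vec_prod_zero[OF Td_carrier] by blast
  define S where "S = {c. c < nn \<and> v $ c \<noteq> 0}"
  have fin: "finite S" unfolding S_def by simp
  have ne: "S \<noteq> {}"
  proof
    assume "S = {}"
    then have "v = 0\<^sub>v nn" using v(1) unfolding S_def by (intro eq_vecI) auto
    with v(2) show False by simp
  qed
  define M where "M = Max (dst qs ` S)"
  have "M \<in> dst qs ` S" unfolding M_def using fin ne by (intro Max_in) auto
  then obtain c where cS: "c \<in> S" and cM: "dst qs c = M" by auto
  have mx: "dst qs c' \<le> dst qs c" if "c' \<in> S" for c'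
    unfolding cM M_def using fin that by (intro Max_ge) auto
  have c: "c < nn" and vc: "v $ c \<noteq> 0" using cS unfolding S_def by auto
  have "(T *\<^sub>v v) $ c = (\<Sum>k\<in>{0..<nn}. T $$ (c, k) * v $ k)"
    using c v(1) Td_carrier[of qs F] by (auto simp: scalar_prod_def)
  also have "\<dots> = T $$ (c, c) * v $ c"
  proof (rule sum_single)
    fix k assume k: "k \<in> {0..<nn}" and kc: "k \<noteq> c"
    show "T $$ (c, k) * v $ k = 0"
    proof (cases "v $ k = 0")
      case False
      then have "k \<in> S" using k unfolding S_def by auto
      then have "dst qs k \<le> dst qs c" by (rule mx)
      then have "T $$ (c, k) = 0" using T_off[OF c _ _ kc[symmetric]] k by force
      then show ?thesis by simp
    qed simp
  qed (use c in auto)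
  also have "\<dots> = v $ c" using T_diag[OF c] by simp
  finally have "(T *\<^sub>v v) $ c \<noteq> 0" using vc by simp
  with v(3) c show False by simp
qed

lemma T_inv: "\<exists>Ti. Ti \<in> carrier_mat nn nn \<and> T * Ti = 1\<^sub>m nn \<and> Ti * T = 1\<^sub>m nn"
proof -
  have "T \<in> Units (ring_mat TYPE(real) nn ())"
    by (rule det_non_zero_imp_unit[OF Td_carrier T_det])
  then show ?thesis unfolding Units_def by (auto simp: ring_mat_simps)
qed

lemma col_T: "c < nn \<Longrightarrow> col T c = b (bl c) (dst qs c)"
  by (rule eq_vecI) (auto simp: Td_def)

definition "LL = Jdiag qs * T + Bdiag qs * (F * T)"
definition "ZZ = mat nn mm (\<lambda>(r,j). LL $$ (r, sq j))"

lemma LL_carrier: "LL \<in> carrier_mat nn nn"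
  unfolding LL_def using Jdiag_carrier[of qs] Bdiag_carrier[of qs] Td_carrier[of qs F] F by auto

lemma LL_idx: "r < nn \<Longrightarrow> c < nn \<Longrightarrow> LL $$ (r, c) =
   (if istop r then 0 else T $$ (Suc r, c)) + (if istop r then (F * T) $$ (bl r, c) else 0)"
proof -
  assume r: "r < nn" and c: "c < nn"
  have FT: "F * T \<in> carrier_mat mm nn" using F Td_carrier[of qs F] by auto
  have "LL $$ (r,c) = (Jdiag qs * T) $$ (r,c) + (Bdiag qs * (F * T)) $$ (r,c)"
    unfolding LL_def using r c Jdiag_carrier[of qs] Bdiag_carrier[of qs] Td_carrier[of qs F] FT by simp
  then show ?thesis using JX[OF Td_carrier r c] BY[OF FT r c] by simp
qed

lemma main: "LL = T * Jdiag qs + Bdiag qs * Fp qs F + ZZ * Cdiag qs"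
proof (rule eq_matI)
  have ZC: "ZZ \<in> carrier_mat nn mm" by (simp add: ZZ_def)
  show "dim_row LL = dim_row (T * Jdiag qs + Bdiag qs * Fp qs F + ZZ * Cdiag qs)"
    using LL_carrier ZC by (simp add: Td_def)
  show "dim_col LL = dim_col (T * Jdiag qs + Bdiag qs * Fp qs F + ZZ * Cdiag qs)"
    using LL_carrier ZC Cdiag_carrier[of qs] by simp
  fix r c assume r': "r < dim_row (T * Jdiag qs + Bdiag qs * Fp qs F + ZZ * Cdiag qs)"
    and c': "c < dim_col (T * Jdiag qs + Bdiag qs * Fp qs F + ZZ * Cdiag qs)"
  have r: "r < nn" and c: "c < nn" using r' c' ZC Cdiag_carrier[of qs] by (auto simp: Td_def)
  have rhs: "(T * Jdiag qs + Bdiag qs * Fp qs F + ZZ * Cdiag qs) $$ (r, c) =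
     (if c = sq (bl c) then 0 else T $$ (r, c - 1)) + (if istop r then Fp qs F $$ (bl r, c) else 0)
     + (if c = sq (bl c) then ZZ $$ (r, bl c) else 0)"
    using XJ[OF Td_carrier r c] BY[OF Fp_carrier r c] YC[OF ZC r c] r c ZC
      Jdiag_carrier[of qs] Bdiag_carrier[of qs] Td_carrier[of qs F] Fp_carrier[of qs F]
      Cdiag_carrier[of qs] by simp
  have blr: "bl r < mm" using r_props[OF r] by simp
  have blc: "bl c < mm" using r_props[OF c] by simp
  show "LL $$ (r, c) = (T * Jdiag qs + Bdiag qs * Fp qs F + ZZ * Cdiag qs) $$ (r, c)"
  proof (cases "c = sq (bl c)")
    case True
    have "ZZ $$ (r, bl c) = LL $$ (r, c)" using True r blc by (simp add: ZZ_def)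
    moreover have "Fp qs F $$ (bl r, c) = 0" using True blr c by (simp add: Fp_def)
    ultimately show ?thesis unfolding rhs using True by simp
  next
    case False
    note ps = prev_same[OF c False]
    have Tc1: "T $$ (r, c - 1) = b (bl c) (Suc (dst qs c)) $ r"
      using T_idx[OF r, of "c - 1"] ps c by simp
    have FT: "(F * T) $$ (bl r, c) = row F (bl r) \<bullet> b (bl c) (dst qs c)"
      using F blr c col_T[OF c] Td_carrier[of qs F] by simp
    have Fp: "Fp qs F $$ (bl r, c) = (if bl c < bl r then (F * T) $$ (bl r, c) else 0)"
      using False blr c by (simp add: Fp_def)
    show ?thesis
    proof (cases "istop r")
      case True
      then show ?thesis unfolding rhs LL_idx[OF r c] Tc1 Fp FT using False r by auto
    next
      case nt: False
      note n2 = nontop[OF r nt]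
      have "T $$ (Suc r, c) = b (bl c) (dst qs c) $ Suc r" using T_idx n2 c by simp
      then show ?thesis unfolding rhs LL_idx[OF r c] Tc1 using False r nt by simp
    qed
  qed
qed

end

context qsF begin

lemma Fp_struct: "Fdd_structured qs (Fp qs F)"
  unfolding Fdd_structured_def
proof (intro allI impI)
  fix i j k assume i: "i < mm" and j: "j < mm" and k: "k < qs ! j" and h: "i \<le> j \<or> k = 0"
  have lt: "sq j + k < nn" using ss_Suc[OF j] sqSuc_le[OF j] k by simp
  have bl: "bl (sq j + k) = j" by (rule blk_ss[OF j k])
  show "Fp qs F $$ (i, sum_list (take j qs) + k) = 0"
    using i lt bl h unfolding ss_def[symmetric] by (auto simp: Fp_def)
qed

lemma transform:
  assumes H: "H \<in> carrier_mat nn mm"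
  shows "\<exists>Ti. Ti \<in> carrier_mat nn nn \<and> T * Ti = 1\<^sub>m nn \<and> Ti * T = 1\<^sub>m nn \<and>
     Ti * Bdiag qs = Bdiag qs \<and>
     Ti * (Jdiag qs + Bdiag qs * F + H * Cdiag qs) * T = Jdiag qs + Bdiag qs * Fp qs F + (Ti * (ZZ + H)) * Cdiag qs"
proof -
  obtain Ti where Ti: "Ti \<in> carrier_mat nn nn" "T * Ti = 1\<^sub>m nn" "Ti * T = 1\<^sub>m nn"
    using T_inv by blast
  have Tc: "T \<in> carrier_mat nn nn" by (rule Td_carrier)
  have Jc: "Jdiag qs \<in> carrier_mat nn nn" by (rule Jdiag_carrier)
  have Bc: "Bdiag qs \<in> carrier_mat nn mm" by (rule Bdiag_carrier)
  have Cc: "Cdiag qs \<in> carrier_mat mm nn" by (rule Cdiag_carrier)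
  have Fpc: "Fp qs F \<in> carrier_mat mm nn" by (rule Fp_carrier)
  have Zc: "ZZ \<in> carrier_mat nn mm" by (simp add: ZZ_def)
  have TiB: "Ti * Bdiag qs = Bdiag qs"
  proof -
    have "Ti * Bdiag qs = Ti * (T * Bdiag qs)" using TB by simp
    also have "\<dots> = (Ti * T) * Bdiag qs" using assoc_mult_mat[OF Ti(1) Tc Bc] by simp
    also have "\<dots> = Bdiag qs" using Ti Bc by simp
    finally show ?thesis .
  qed
  have JBF: "Jdiag qs + Bdiag qs * F \<in> carrier_mat nn nn" using Jc Bc F by auto
  have HC: "H * Cdiag qs \<in> carrier_mat nn nn" using H Cc by auto
  have TJBF: "T * Jdiag qs + Bdiag qs * Fp qs F \<in> carrier_mat nn nn" using Tc Jc Bc Fpc by auto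
  have ZC: "ZZ * Cdiag qs \<in> carrier_mat nn nn" using Zc Cc by auto
  have e1: "(Jdiag qs + Bdiag qs * F + H * Cdiag qs) * T = (Jdiag qs + Bdiag qs * F) * T + (H * Cdiag qs) * T"
    by (rule add_mult_distrib_mat[OF JBF HC Tc])
  have e2: "(Jdiag qs + Bdiag qs * F) * T = Jdiag qs * T + (Bdiag qs * F) * T"
    by (rule add_mult_distrib_mat[OF Jc _ Tc]) (use Bc F in auto)
  have e3: "(Bdiag qs * F) * T = Bdiag qs * (F * T)" by (rule assoc_mult_mat[OF Bc F Tc])
  have e4: "(H * Cdiag qs) * T = H * Cdiag qs" using assoc_mult_mat[OF H Cc Tc] CT by simp
  have e5: "T * Jdiag qs + Bdiag qs * Fp qs F + ZZ * Cdiag qs + H * Cdiag qs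
      = T * Jdiag qs + Bdiag qs * Fp qs F + (ZZ * Cdiag qs + H * Cdiag qs)"
    by (rule assoc_add_mat[OF TJBF ZC HC])
  have e6: "ZZ * Cdiag qs + H * Cdiag qs = (ZZ + H) * Cdiag qs"
    by (rule add_mult_distrib_mat[OF Zc H Cc, symmetric])
  have AT: "(Jdiag qs + Bdiag qs * F + H * Cdiag qs) * T = T * Jdiag qs + Bdiag qs * Fp qs F + (ZZ + H) * Cdiag qs"
    unfolding e1 e2 e3 e4 LL_def[symmetric] main e5 e6 ..
  have A1: "Jdiag qs + Bdiag qs * F + H * Cdiag qs \<in> carrier_mat nn nn" using JBF HC by auto
  have f1: "Ti * (Jdiag qs + Bdiag qs * F + H * Cdiag qs) * T = Ti * ((Jdiag qs + Bdiag qs * F + H * Cdiag qs) * T)"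
    by (rule assoc_mult_mat[OF Ti(1) A1 Tc])
  have TJ: "T * Jdiag qs \<in> carrier_mat nn nn" using Tc Jc by auto
  have BFp: "Bdiag qs * Fp qs F \<in> carrier_mat nn nn" using Bc Fpc by auto
  have ZHC: "(ZZ + H) * Cdiag qs \<in> carrier_mat nn nn" using Zc H Cc by auto
  have f2: "Ti * (T * Jdiag qs + Bdiag qs * Fp qs F + (ZZ + H) * Cdiag qs) =
     Ti * (T * Jdiag qs + Bdiag qs * Fp qs F) + Ti * ((ZZ + H) * Cdiag qs)"
    by (rule mult_add_distrib_mat[OF Ti(1) TJBF ZHC])
  have f3: "Ti * (T * Jdiag qs + Bdiag qs * Fp qs F) = Ti * (T * Jdiag qs) + Ti * (Bdiag qs * Fp qs F)"
    by (rule mult_add_distrib_mat[OF Ti(1) TJ BFp])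
  have f4: "Ti * (T * Jdiag qs) = Jdiag qs" using assoc_mult_mat[OF Ti(1) Tc Jc] Ti(3) Jc by simp
  have f5: "Ti * (Bdiag qs * Fp qs F) = Bdiag qs * Fp qs F" using assoc_mult_mat[OF Ti(1) Bc Fpc] TiB by simp
  have f6: "Ti * ((ZZ + H) * Cdiag qs) = (Ti * (ZZ + H)) * Cdiag qs"
    using assoc_mult_mat[OF Ti(1) _ Cc, of "ZZ + H"] Zc H by simp
  have "Ti * (Jdiag qs + Bdiag qs * F + H * Cdiag qs) * T = Jdiag qs + Bdiag qs * Fp qs F + (Ti * (ZZ + H)) * Cdiag qs"
    unfolding f1 AT f2 f3 f4 f5 f6 ..
  with Ti TiB show ?thesis by blast
qed

end

context qsF begin
lemma transform2:
  assumes H: "H \<in> carrier_mat nn mm"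
  shows "\<exists>Ti H'. Ti \<in> carrier_mat nn nn \<and> H' \<in> carrier_mat nn mm \<and> T * Ti = 1\<^sub>m nn \<and> Ti * T = 1\<^sub>m nn \<and>
     Ti * Bdiag qs = Bdiag qs \<and> Cdiag qs * T = Cdiag qs \<and> Fdd_structured qs (Fp qs F) \<and>
     Ti * (Jdiag qs + Bdiag qs * F + H * Cdiag qs) * T = Jdiag qs + Bdiag qs * Fp qs F + H' * Cdiag qs"
proof -
  obtain Ti where Ti: "Ti \<in> carrier_mat nn nn" "T * Ti = 1\<^sub>m nn" "Ti * T = 1\<^sub>m nn"
     "Ti * Bdiag qs = Bdiag qs"
     "Ti * (Jdiag qs + Bdiag qs * F + H * Cdiag qs) * T = Jdiag qs + Bdiag qs * Fp qs F + (Ti * (ZZ + H)) * Cdiag qs"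
    using transform[OF H] by blast
  have "Ti * (ZZ + H) \<in> carrier_mat nn mm" using Ti(1) H by (auto simp: ZZ_def)
  then show ?thesis using Ti CT Fp_struct by blast
qed
end

lemma zero_mat_mult_vec: "w \<in> carrier_vec m \<Longrightarrow> (0\<^sub>m n m :: real mat) *\<^sub>v w = 0\<^sub>v n"
  by (intro eq_vecI) (auto simp: scalar_prod_def)

lemma Ts_vec:
  fixes T :: "real mat"
  assumes T: "T \<in> carrier_mat nd nd" and p: "p \<in> carrier_vec N" and w: "w \<in> carrier_vec nd"
  shows "four_block_mat (1\<^sub>m N) (0\<^sub>m N nd) (0\<^sub>m nd N) T *\<^sub>v (p @\<^sub>v w) = p @\<^sub>v (T *\<^sub>v w)"
proof -
  have "four_block_mat (1\<^sub>m N) (0\<^sub>m N nd) (0\<^sub>m nd N) T *\<^sub>v (p @\<^sub>v w)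
     = (1\<^sub>m N *\<^sub>v p + 0\<^sub>m N nd *\<^sub>v w) @\<^sub>v (0\<^sub>m nd N *\<^sub>v p + T *\<^sub>v w)"
    by (rule four_block_mat_mult_vec) (use T p w in auto)
  also have "\<dots> = p @\<^sub>v (T *\<^sub>v w)" using T p w by (simp add: zero_mat_mult_vec)
  finally show ?thesis .
qed

lemma app3:
  assumes "a \<in> carrier_vec na" "b \<in> carrier_vec nb" "c \<in> carrier_vec nc"
  shows "a @\<^sub>v (b @\<^sub>v (c @\<^sub>v w)) = (a @\<^sub>v (b @\<^sub>v c)) @\<^sub>v w"
    and "a @\<^sub>v (b @\<^sub>v c) \<in> carrier_vec (na + nb + nc)"
proof -
  show "a @\<^sub>v (b @\<^sub>v (c @\<^sub>v w)) = (a @\<^sub>v (b @\<^sub>v c)) @\<^sub>v w"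
    by (rule eq_vecI) (use assms in \<open>auto simp: index_append_vec add.assoc\<close>)
  have "a @\<^sub>v (b @\<^sub>v c) \<in> carrier_vec (na + (nb + nc))" using assms by auto
  then show "a @\<^sub>v (b @\<^sub>v c) \<in> carrier_vec (na + nb + nc)" by (simp add: add.assoc)
qed

lemma mv6:
  assumes "M \<in> carrier_mat n n" "v1 \<in> carrier_vec n" "v2 \<in> carrier_vec n" "v3 \<in> carrier_vec n"
    "v4 \<in> carrier_vec n" "v5 \<in> carrier_vec n" "v6 \<in> carrier_vec n"
  shows "M *\<^sub>v (v1 + v2 + v3 + v4 + v5 + v6) = M *\<^sub>v v1 + M *\<^sub>v v2 + M *\<^sub>v v3 + M *\<^sub>v v4 + M *\<^sub>v v5 + M *\<^sub>v v6"
  using assms by (intro eq_vecI) (auto simp: scalar_prod_add_distrib[of _ n] add.assoc)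


lemma SCB_basic: "is_SCB A B C D na nb nc nd m0 md mc pb ls qs Fdd \<Longrightarrow>
  length ls = pb \<and> (\<forall>l\<in>set ls. 1 \<le> l) \<and> sum_list ls = nb \<and>
  length qs = md \<and> sorted_wrt (\<ge>) qs \<and> (\<forall>q\<in>set qs. 1 \<le> q) \<and> sum_list qs = nd \<and>
  A \<in> carrier_mat (na+nb+nc+nd) (na+nb+nc+nd) \<and>
  B \<in> carrier_mat (na+nb+nc+nd) (m0+md+mc) \<and>
  C \<in> carrier_mat (m0+md+pb) (na+nb+nc+nd) \<and>
  D \<in> carrier_mat (m0+md+pb) (m0+md+mc) \<and>
  Fdd \<in> carrier_mat md nd"
  unfolding is_SCB_def by (elim conjE) (intro conjI; assumption)

lemma aux:
  fixes A B C D Fdd :: "real mat"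
    and na nb nc m0 mc pb :: nat
    and ls qs :: "nat list"
  assumes scb: "is_SCB A B C D na nb nc (sum_list qs) m0 (length qs) mc pb ls qs Fdd"
  shows "\<exists>Td Tdi. Td \<in> carrier_mat (sum_list qs) (sum_list qs) \<and> Tdi \<in> carrier_mat (sum_list qs) (sum_list qs) \<and>
           Td * Tdi = 1\<^sub>m (sum_list qs) \<and> Tdi * Td = 1\<^sub>m (sum_list qs) \<and>
           (let Ts = four_block_mat (1\<^sub>m (na+nb+nc)) (0\<^sub>m (na+nb+nc) (sum_list qs)) (0\<^sub>m (sum_list qs) (na+nb+nc)) (Td);
                Tsi = four_block_mat (1\<^sub>m (na+nb+nc)) (0\<^sub>m (na+nb+nc) (sum_list qs)) (0\<^sub>m (sum_list qs) (na+nb+nc)) (Tdi) in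
            \<exists>Fdd'. is_SCB (Tsi * A * Ts) (Tsi * B) (C * Ts) D na nb nc (sum_list qs) m0 (length qs) mc pb ls qs Fdd'
                   \<and> Fdd_structured qs Fdd') \<and>
           Cdiag qs * Td = Cdiag qs \<and> Tdi * Bdiag qs = Bdiag qs"
proof -
  note defs = is_SCB_def
  have basic: "length ls = pb" "\<forall>l\<in>set ls. 1 \<le> l" "sum_list ls = nb"
     "sorted_wrt (\<ge>) qs" "\<forall>q\<in>set qs. 1 \<le> q"
    and cA: "A \<in> carrier_mat (na+nb+nc+sum_list qs) (na+nb+nc+sum_list qs)"
    and cB: "B \<in> carrier_mat (na+nb+nc+sum_list qs) (m0+length qs+mc)"
    and cC: "C \<in> carrier_mat (m0+length qs+pb) (na+nb+nc+sum_list qs)"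
    and cD: "D \<in> carrier_mat (m0+length qs+pb) (m0+length qs+mc)"
    and cF: "Fdd \<in> carrier_mat (length qs) (sum_list qs)"
    using SCB_basic[OF scb] by auto
  from scb obtain C0a C0b C0c C0d Aa Hab Had B0a Hbb Hbd B0b Fca Hcb Ac Hcd B0c Bc
        Fda Fdb Fdc Hdd B0d where
    wc: "C0a \<in> carrier_mat m0 na" "C0b \<in> carrier_mat m0 nb"
        "C0c \<in> carrier_mat m0 nc" "C0d \<in> carrier_mat m0 (sum_list qs)"
        "Aa \<in> carrier_mat na na" "Hab \<in> carrier_mat na pb"
        "Had \<in> carrier_mat na (length qs)" "B0a \<in> carrier_mat na m0"
        "Hbb \<in> carrier_mat nb pb" "Hbd \<in> carrier_mat nb (length qs)" "B0b \<in> carrier_mat nb m0"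
        "Fca \<in> carrier_mat mc na" "Hcb \<in> carrier_mat nc pb" "Ac \<in> carrier_mat nc nc"
        "Hcd \<in> carrier_mat nc (length qs)" "B0c \<in> carrier_mat nc m0" "Bc \<in> carrier_mat nc mc"
        "Fda \<in> carrier_mat (length qs) na" "Fdb \<in> carrier_mat (length qs) nb" "Fdc \<in> carrier_mat (length qs) nc"
        "Hdd \<in> carrier_mat (sum_list qs) (length qs)" "B0d \<in> carrier_mat (sum_list qs) m0"
    and weq: "(let Cb = Cdiag ls; Ab = Jdiag ls + Hbb * Cb;
             Bd = Bdiag qs; Cd = Cdiag qs; Ad = Jdiag qs + Bd * Fdd + Hdd * Cd in
         \<forall>xa \<in> carrier_vec na. \<forall>xb \<in> carrier_vec nb. \<forall>xc \<in> carrier_vec nc.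
         \<forall>xd \<in> carrier_vec (sum_list qs). \<forall>u0 \<in> carrier_vec m0. \<forall>ud \<in> carrier_vec (length qs).
         \<forall>uc \<in> carrier_vec mc.
           (let y0 = C0a *\<^sub>v xa + C0b *\<^sub>v xb + C0c *\<^sub>v xc + C0d *\<^sub>v xd + u0;
                x = xa @\<^sub>v xb @\<^sub>v xc @\<^sub>v xd;
                u = u0 @\<^sub>v ud @\<^sub>v uc in
            C *\<^sub>v x + D *\<^sub>v u = y0 @\<^sub>v (Cd *\<^sub>v xd) @\<^sub>v (Cb *\<^sub>v xb) \<and>
            A *\<^sub>v x + B *\<^sub>v u =
              (Aa *\<^sub>v xa + Hab *\<^sub>v (Cb *\<^sub>v xb) + Had *\<^sub>v (Cd *\<^sub>v xd) + B0a *\<^sub>v y0)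
              @\<^sub>v (Ab *\<^sub>v xb + Hbd *\<^sub>v (Cd *\<^sub>v xd) + B0b *\<^sub>v y0)
              @\<^sub>v (Bc *\<^sub>v (Fca *\<^sub>v xa) + Hcb *\<^sub>v (Cb *\<^sub>v xb) + Ac *\<^sub>v xc
                    + Hcd *\<^sub>v (Cd *\<^sub>v xd) + B0c *\<^sub>v y0 + Bc *\<^sub>v uc)
              @\<^sub>v (Bd *\<^sub>v (Fda *\<^sub>v xa) + Bd *\<^sub>v (Fdb *\<^sub>v xb) + Bd *\<^sub>v (Fdc *\<^sub>v xc)
                    + Ad *\<^sub>v xd + B0d *\<^sub>v y0 + Bd *\<^sub>v ud)))"
    using scb unfolding is_SCB_def by (elim conjE exE) (intro that; assumption)
  interpret qsF qs Fdd by unfold_locales (use basic cF in auto)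
  obtain Ti H' where tr: "Ti \<in> carrier_mat (sum_list qs) (sum_list qs)" "H' \<in> carrier_mat (sum_list qs) (length qs)"
     "Td qs Fdd * Ti = 1\<^sub>m (sum_list qs)" "Ti * Td qs Fdd = 1\<^sub>m (sum_list qs)"
     "Ti * Bdiag qs = Bdiag qs" "Cdiag qs * Td qs Fdd = Cdiag qs" "Fdd_structured qs (Fp qs Fdd)"
     "Ti * (Jdiag qs + Bdiag qs * Fdd + Hdd * Cdiag qs) * Td qs Fdd = (Jdiag qs + Bdiag qs * Fp qs Fdd + H' * Cdiag qs)"
    using transform2[OF wc(21)] by blast
  have Tc: "Td qs Fdd \<in> carrier_mat (sum_list qs) (sum_list qs)" by (rule Td_carrier)
  have Tsc: "four_block_mat (1\<^sub>m (na+nb+nc)) (0\<^sub>m (na+nb+nc) (sum_list qs)) (0\<^sub>m (sum_list qs) (na+nb+nc)) (Td qs Fdd) \<in> carrier_mat (na+nb+nc+sum_list qs) (na+nb+nc+sum_list qs)" using Tc by auto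
  have Tsic: "four_block_mat (1\<^sub>m (na+nb+nc)) (0\<^sub>m (na+nb+nc) (sum_list qs)) (0\<^sub>m (sum_list qs) (na+nb+nc)) (Ti) \<in> carrier_mat (na+nb+nc+sum_list qs) (na+nb+nc+sum_list qs)" using tr(1) by auto
  have Cbc: "Cdiag ls \<in> carrier_mat pb nb" using Cdiag_carrier[of ls] basic by simp
  have Cdc: "Cdiag qs \<in> carrier_mat (length qs) (sum_list qs)" by (rule Cdiag_carrier)
  have Bdc: "Bdiag qs \<in> carrier_mat (sum_list qs) (length qs)" by (rule Bdiag_carrier)
  have Jbc: "Jdiag ls \<in> carrier_mat nb nb" using Jdiag_carrier[of ls] basic by simp
  have Jdc: "Jdiag qs \<in> carrier_mat (sum_list qs) (sum_list qs)" by (rule Jdiag_carrier)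
  have Fpc: "Fp qs Fdd \<in> carrier_mat (length qs) (sum_list qs)" by (rule Fp_carrier)
  have Adc: "(Jdiag qs + Bdiag qs * Fdd + Hdd * Cdiag qs) \<in> carrier_mat (sum_list qs) (sum_list qs)" using Jdc Bdc cF wc(21) Cdc by auto
  have Abc: "(Jdiag ls + Hbb * Cdiag ls) \<in> carrier_mat nb nb" using Jbc wc(9) Cbc by auto
  have key: "\<forall>xa \<in> carrier_vec na. \<forall>xb \<in> carrier_vec nb. \<forall>xc \<in> carrier_vec nc.
         \<forall>xd \<in> carrier_vec (sum_list qs). \<forall>u0 \<in> carrier_vec m0. \<forall>ud \<in> carrier_vec (length qs).
         \<forall>uc \<in> carrier_vec mc.
         (four_block_mat (1\<^sub>m (na+nb+nc)) (0\<^sub>m (na+nb+nc) (sum_list qs)) (0\<^sub>m (sum_list qs) (na+nb+nc)) (Ti) * A * four_block_mat (1\<^sub>m (na+nb+nc)) (0\<^sub>m (na+nb+nc) (sum_list qs)) (0\<^sub>m (sum_list qs) (na+nb+nc)) (Td qs Fdd)) *\<^sub>v (xa @\<^sub>v xb @\<^sub>v xc @\<^sub>v xd) + (four_block_mat (1\<^sub>m (na+nb+nc)) (0\<^sub>m (na+nb+nc) (sum_list qs)) (0\<^sub>m (sum_list qs) (na+nb+nc)) (Ti) * B) *\<^sub>v (u0 @\<^sub>v ud @\<^sub>v uc) = (Aa *\<^sub>v xa + Hab *\<^sub>v (Cdiag ls *\<^sub>v xb) + Had *\<^sub>v (Cdiag qs *\<^sub>v xd) + B0a *\<^sub>v (C0a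 *\<^sub>v xa + C0b *\<^sub>v xb + C0c *\<^sub>v xc + (C0d * Td qs Fdd) *\<^sub>v xd + u0)) @\<^sub>v ((Jdiag ls + Hbb * Cdiag ls) *\<^sub>v xb + Hbd *\<^sub>v (Cdiag qs *\<^sub>v xd) + B0b *\<^sub>v (C0a *\<^sub>v xa + C0b *\<^sub>v xb + C0c *\<^sub>v xc + (C0d * Td qs Fdd) *\<^sub>v xd + u0)) @\<^sub>v (Bc *\<^sub>v (Fca *\<^sub>v xa) + Hcb *\<^sub>v (Cdiag ls *\<^sub>v xb) + Ac *\<^sub>v xc + Hcd *\<^sub>v (Cdiag qs *\<^sub>v xd) + B0c *\<^sub>v (C0a *\<^sub>v xa + C0b *\<^sub>v xb + C0c *\<^sub>v xc + (C0d * Td qs Fdd) *\<^sub>v xd + u0) + Bc *\<^sub>v uc) @\<^sub>v (Bdiag qs *\<^sub>v (Fda *\<^sub>v xa) + Bdiag qs *\<^sub>v (Fdb *\<^sub>v xb) + Bdiag qs *\<^sub>v (Fdc *\<^sub>v xc) + (Jdiag qs + Bdiag qs * Fp qs Fdd + H' * Cdiag qs) *\<^sub>v xd + (Ti * B0d) *\<^sub>v (C0a *\<^sub>v xa + C0b *\<^sub>v xb + C0c *\<^sub>v xc + (C0d * Td qs Fdd) *\<^sub>v xd + u0) + Bdiag qs *\<^sub>v ud) \<and>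
         (C * four_block_mat (1\<^sub>m (na+nb+nc)) (0\<^sub>m (na+nb+nc) (sum_list qs)) (0\<^sub>m (sum_list qs) (na+nb+nc)) (Td qs Fdd)) *\<^sub>v (xa @\<^sub>v xb @\<^sub>v xc @\<^sub>v xd) + D *\<^sub>v (u0 @\<^sub>v ud @\<^sub>v uc) = (C0a *\<^sub>v xa + C0b *\<^sub>v xb + C0c *\<^sub>v xc + (C0d * Td qs Fdd) *\<^sub>v xd + u0) @\<^sub>v (Cdiag qs *\<^sub>v xd) @\<^sub>v (Cdiag ls *\<^sub>v xb)"
  proof (intro ballI)
    fix xa xb xc xd u0 ud uc :: "real vec"
    assume xa: "xa \<in> carrier_vec na" and xb: "xb \<in> carrier_vec nb" and xc: "xc \<in> carrier_vec nc"
      and xd: "xd \<in> carrier_vec (sum_list qs)" and u0: "u0 \<in> carrier_vec m0" and ud: "ud \<in> carrier_vec (length qs)"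
      and uc: "uc \<in> carrier_vec mc"
    have xdo: "(Td qs Fdd *\<^sub>v xd) \<in> carrier_vec (sum_list qs)" using Tc xd by auto
    note E = weq[unfolded Let_def, rule_format, OF xa xb xc xdo u0 ud uc]
    have xbc: "(xa @\<^sub>v xb @\<^sub>v xc @\<^sub>v xd) \<in> carrier_vec (na+nb+nc+sum_list qs)" using xa xb xc xd by (simp add: add.assoc)
    have uc': "(u0 @\<^sub>v ud @\<^sub>v uc) \<in> carrier_vec (m0+length qs+mc)" using u0 ud uc by (simp add: add.assoc)
    have s2: "four_block_mat (1\<^sub>m (na+nb+nc)) (0\<^sub>m (na+nb+nc) (sum_list qs)) (0\<^sub>m (sum_list qs) (na+nb+nc)) (Td qs Fdd) *\<^sub>v (xa @\<^sub>v xb @\<^sub>v xc @\<^sub>v xd) = (xa @\<^sub>v xb @\<^sub>v xc @\<^sub>v (Td qs Fdd *\<^sub>v xd))"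
    proof -
      have "(xa @\<^sub>v xb @\<^sub>v xc @\<^sub>v xd) = (xa @\<^sub>v (xb @\<^sub>v xc)) @\<^sub>v xd" by (rule app3(1)[OF xa xb xc])
      then have "four_block_mat (1\<^sub>m (na+nb+nc)) (0\<^sub>m (na+nb+nc) (sum_list qs)) (0\<^sub>m (sum_list qs) (na+nb+nc)) (Td qs Fdd) *\<^sub>v (xa @\<^sub>v xb @\<^sub>v xc @\<^sub>v xd) = (xa @\<^sub>v (xb @\<^sub>v xc)) @\<^sub>v (Td qs Fdd *\<^sub>v xd)"
        using Ts_vec[OF Tc app3(2)[OF xa xb xc] xd] by simp
      also have "\<dots> = (xa @\<^sub>v xb @\<^sub>v xc @\<^sub>v (Td qs Fdd *\<^sub>v xd))" by (rule app3(1)[OF xa xb xc, symmetric])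
      finally show ?thesis .
    qed
    have cd: "Cdiag qs *\<^sub>v (Td qs Fdd *\<^sub>v xd) = Cdiag qs *\<^sub>v xd" using tr(6) Cdc Tc xd by (metis assoc_mult_mat_vec)
    have y0eq: "C0d *\<^sub>v (Td qs Fdd *\<^sub>v xd) = (C0d * Td qs Fdd) *\<^sub>v xd" using wc(4) Tc xd by (metis assoc_mult_mat_vec)
    have y0c: "(C0a *\<^sub>v xa + C0b *\<^sub>v xb + C0c *\<^sub>v xc + C0d *\<^sub>v (Td qs Fdd *\<^sub>v xd) + u0) \<in> carrier_vec m0" using wc xa xb xc xdo u0 by auto
    have P1c: "(Aa *\<^sub>v xa + Hab *\<^sub>v (Cdiag ls *\<^sub>v xb) + Had *\<^sub>v (Cdiag qs *\<^sub>v (Td qs Fdd *\<^sub>v xd)) + B0a *\<^sub>v (C0a *\<^sub>v xa + C0b *\<^sub>v xb + C0c *\<^sub>v xc + C0d *\<^sub>v (Td qs Fdd *\<^sub>v xd) + u0)) \<in> carrier_vec na" using wc xa xb xc xdo y0c Cbc Cdc by auto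
    have P2c: "((Jdiag ls + Hbb * Cdiag ls) *\<^sub>v xb + Hbd *\<^sub>v (Cdiag qs *\<^sub>v (Td qs Fdd *\<^sub>v xd)) + B0b *\<^sub>v (C0a *\<^sub>v xa + C0b *\<^sub>v xb + C0c *\<^sub>v xc + C0d *\<^sub>v (Td qs Fdd *\<^sub>v xd) + u0)) \<in> carrier_vec nb" using wc xa xb xc xdo y0c Cbc Cdc mult_mat_vec_carrier[OF Abc xb] by auto
    have P3c: "(Bc *\<^sub>v (Fca *\<^sub>v xa) + Hcb *\<^sub>v (Cdiag ls *\<^sub>v xb) + Ac *\<^sub>v xc + Hcd *\<^sub>v (Cdiag qs *\<^sub>v (Td qs Fdd *\<^sub>v xd)) + B0c *\<^sub>v (C0a *\<^sub>v xa + C0b *\<^sub>v xb + C0c *\<^sub>v xc + C0d *\<^sub>v (Td qs Fdd *\<^sub>v xd) + u0) + Bc *\<^sub>v uc) \<in> carrier_vec nc" using wc xa xb xc xdo y0c Cbc Cdc uc by auto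
    have P4c: "(Bdiag qs *\<^sub>v (Fda *\<^sub>v xa) + Bdiag qs *\<^sub>v (Fdb *\<^sub>v xb) + Bdiag qs *\<^sub>v (Fdc *\<^sub>v xc) + (Jdiag qs + Bdiag qs * Fdd + Hdd * Cdiag qs) *\<^sub>v (Td qs Fdd *\<^sub>v xd) + B0d *\<^sub>v (C0a *\<^sub>v xa + C0b *\<^sub>v xb + C0c *\<^sub>v xc + C0d *\<^sub>v (Td qs Fdd *\<^sub>v xd) + u0) + Bdiag qs *\<^sub>v ud) \<in> carrier_vec (sum_list qs)" using wc xa xb xc xdo y0c Cbc Cdc Bdc ud mult_mat_vec_carrier[OF Adc xdo] by auto
    have s5: "Ti *\<^sub>v (Bdiag qs *\<^sub>v (Fda *\<^sub>v xa) + Bdiag qs *\<^sub>v (Fdb *\<^sub>v xb) + Bdiag qs *\<^sub>v (Fdc *\<^sub>v xc) + (Jdiag qs + Bdiag qs * Fdd + Hdd * Cdiag qs) *\<^sub>v (Td qs Fdd *\<^sub>v xd) + B0d *\<^sub>v (C0a *\<^sub>v xa + C0b *\<^sub>v xb + C0c *\<^sub>v xc + C0d *\<^sub>v (Td qs Fdd *\<^sub>v xd) + u0) + Bdiag qs *\<^sub>v ud) = (Bdiag qs *\<^sub>v (Fda *\<^sub>v xa) + Bdiag qs *\<^sub>v (Fdb *\<^sub>v xb) + Bdiag qs *\<^sub>v (Fdc *\<^sub>v xc) + (Jdiag qs + Bdiag qs * Fp qs Fdd + H' * Cdiag qs) *\<^sub>v xd + (Ti * B0d) *\<^sub>v (C0a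 *\<^sub>v xa + C0b *\<^sub>v xb + C0c *\<^sub>v xc + C0d *\<^sub>v (Td qs Fdd *\<^sub>v xd) + u0) + Bdiag qs *\<^sub>v ud)"
    proof -
      have "Ti *\<^sub>v (Bdiag qs *\<^sub>v (Fda *\<^sub>v xa) + Bdiag qs *\<^sub>v (Fdb *\<^sub>v xb) + Bdiag qs *\<^sub>v (Fdc *\<^sub>v xc) + (Jdiag qs + Bdiag qs * Fdd + Hdd * Cdiag qs) *\<^sub>v (Td qs Fdd *\<^sub>v xd) + B0d *\<^sub>v (C0a *\<^sub>v xa + C0b *\<^sub>v xb + C0c *\<^sub>v xc + C0d *\<^sub>v (Td qs Fdd *\<^sub>v xd) + u0) + Bdiag qs *\<^sub>v ud) = Ti *\<^sub>v (Bdiag qs *\<^sub>v (Fda *\<^sub>v xa)) + Ti *\<^sub>v (Bdiag qs *\<^sub>v (Fdb *\<^sub>v xb)) + Ti *\<^sub>v (Bdiag qs *\<^sub>v (Fdc *\<^sub>v xc))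
         + Ti *\<^sub>v ((Jdiag qs + Bdiag qs * Fdd + Hdd * Cdiag qs) *\<^sub>v (Td qs Fdd *\<^sub>v xd)) + Ti *\<^sub>v (B0d *\<^sub>v (C0a *\<^sub>v xa + C0b *\<^sub>v xb + C0c *\<^sub>v xc + C0d *\<^sub>v (Td qs Fdd *\<^sub>v xd) + u0)) + Ti *\<^sub>v (Bdiag qs *\<^sub>v ud)"
        by (rule mv6[OF tr(1)]) (use wc xa xb xc xdo y0c Bdc ud mult_mat_vec_carrier[OF Adc xdo] in auto)
      also have "Ti *\<^sub>v (Bdiag qs *\<^sub>v (Fda *\<^sub>v xa)) = Bdiag qs *\<^sub>v (Fda *\<^sub>v xa)"
        using assoc_mult_mat_vec[OF tr(1) Bdc, of "Fda *\<^sub>v xa"] tr(5) wc xa by simp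
      also have "Ti *\<^sub>v (Bdiag qs *\<^sub>v (Fdb *\<^sub>v xb)) = Bdiag qs *\<^sub>v (Fdb *\<^sub>v xb)"
        using assoc_mult_mat_vec[OF tr(1) Bdc, of "Fdb *\<^sub>v xb"] tr(5) wc xb by simp
      also have "Ti *\<^sub>v (Bdiag qs *\<^sub>v (Fdc *\<^sub>v xc)) = Bdiag qs *\<^sub>v (Fdc *\<^sub>v xc)"
        using assoc_mult_mat_vec[OF tr(1) Bdc, of "Fdc *\<^sub>v xc"] tr(5) wc xc by simp
      also have "Ti *\<^sub>v (Bdiag qs *\<^sub>v ud) = Bdiag qs *\<^sub>v ud"
        using assoc_mult_mat_vec[OF tr(1) Bdc ud] tr(5) by simp
      also have "Ti *\<^sub>v ((Jdiag qs + Bdiag qs * Fdd + Hdd * Cdiag qs) *\<^sub>v (Td qs Fdd *\<^sub>v xd)) = (Jdiag qs + Bdiag qs * Fp qs Fdd + H' * Cdiag qs) *\<^sub>v xd"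
      proof -
        have "Ti *\<^sub>v ((Jdiag qs + Bdiag qs * Fdd + Hdd * Cdiag qs) *\<^sub>v (Td qs Fdd *\<^sub>v xd)) = Ti *\<^sub>v (((Jdiag qs + Bdiag qs * Fdd + Hdd * Cdiag qs) * Td qs Fdd) *\<^sub>v xd)"
          using assoc_mult_mat_vec[OF Adc Tc xd] by simp
        also have "\<dots> = (Ti * ((Jdiag qs + Bdiag qs * Fdd + Hdd * Cdiag qs) * Td qs Fdd)) *\<^sub>v xd"
          using assoc_mult_mat_vec[OF tr(1) _ xd, of "(Jdiag qs + Bdiag qs * Fdd + Hdd * Cdiag qs) * Td qs Fdd"] Adc Tc by simp
        also have "Ti * ((Jdiag qs + Bdiag qs * Fdd + Hdd * Cdiag qs) * Td qs Fdd) = Ti * (Jdiag qs + Bdiag qs * Fdd + Hdd * Cdiag qs) * Td qs Fdd"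
          using assoc_mult_mat[OF tr(1) Adc Tc] by simp
        finally show ?thesis using tr(8) by simp
      qed
      also have "Ti *\<^sub>v (B0d *\<^sub>v (C0a *\<^sub>v xa + C0b *\<^sub>v xb + C0c *\<^sub>v xc + C0d *\<^sub>v (Td qs Fdd *\<^sub>v xd) + u0)) = (Ti * B0d) *\<^sub>v (C0a *\<^sub>v xa + C0b *\<^sub>v xb + C0c *\<^sub>v xc + C0d *\<^sub>v (Td qs Fdd *\<^sub>v xd) + u0)"
        using assoc_mult_mat_vec[OF tr(1) wc(22) y0c] by simp
      finally show ?thesis .
    qed
    have TsiA: "four_block_mat (1\<^sub>m (na+nb+nc)) (0\<^sub>m (na+nb+nc) (sum_list qs)) (0\<^sub>m (sum_list qs) (na+nb+nc)) (Ti) * A \<in> carrier_mat (na+nb+nc+sum_list qs) (na+nb+nc+sum_list qs)"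
      by (rule mult_carrier_mat[OF Tsic cA])
    have Tsxc: "four_block_mat (1\<^sub>m (na+nb+nc)) (0\<^sub>m (na+nb+nc) (sum_list qs)) (0\<^sub>m (sum_list qs) (na+nb+nc)) (Td qs Fdd) *\<^sub>v (xa @\<^sub>v xb @\<^sub>v xc @\<^sub>v xd) \<in> carrier_vec (na+nb+nc+sum_list qs)" by (rule mult_mat_vec_carrier[OF Tsc xbc])
    have Axc: "A *\<^sub>v (four_block_mat (1\<^sub>m (na+nb+nc)) (0\<^sub>m (na+nb+nc) (sum_list qs)) (0\<^sub>m (sum_list qs) (na+nb+nc)) (Td qs Fdd) *\<^sub>v (xa @\<^sub>v xb @\<^sub>v xc @\<^sub>v xd)) \<in> carrier_vec (na+nb+nc+sum_list qs)" by (rule mult_mat_vec_carrier[OF cA Tsxc])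
    have Buc: "B *\<^sub>v (u0 @\<^sub>v ud @\<^sub>v uc) \<in> carrier_vec (na+nb+nc+sum_list qs)" by (rule mult_mat_vec_carrier[OF cB uc'])
    have g2: "(four_block_mat (1\<^sub>m (na+nb+nc)) (0\<^sub>m (na+nb+nc) (sum_list qs)) (0\<^sub>m (sum_list qs) (na+nb+nc)) (Ti) * A * four_block_mat (1\<^sub>m (na+nb+nc)) (0\<^sub>m (na+nb+nc) (sum_list qs)) (0\<^sub>m (sum_list qs) (na+nb+nc)) (Td qs Fdd)) *\<^sub>v (xa @\<^sub>v xb @\<^sub>v xc @\<^sub>v xd) + (four_block_mat (1\<^sub>m (na+nb+nc)) (0\<^sub>m (na+nb+nc) (sum_list qs)) (0\<^sub>m (sum_list qs) (na+nb+nc)) (Ti) * B) *\<^sub>v (u0 @\<^sub>v ud @\<^sub>v uc) = (Aa *\<^sub>v xa + Hab *\<^sub>v (Cdiag ls *\<^sub>v xb) + Had *\<^sub>v (Cdiag qs *\<^sub>v (Td qs Fdd *\<^sub>v xd)) + B0a *\<^sub>v (C0a *\<^sub>v xa + C0b *\<^sub>v xb + C0c *\<^sub>v xc + C0d *\<^sub>v (Td qs Fdd *\<^sub>v xd) + u0)) @\<^sub>v ((Jdiag ls + Hbb * Cdiag ls) *\<^sub>v xb + Hbd *\<^sub>v (Cdiag qs *\<^sub>v (Td qs Fdd *\<^sub>v xd)) + B0b *\<^sub>v (C0a *\<^sub>v xa + C0b *\<^sub>v xb + C0c *\<^sub>v xc + C0d *\<^sub>v (Td qs Fdd *\<^sub>v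 xd) + u0)) @\<^sub>v (Bc *\<^sub>v (Fca *\<^sub>v xa) + Hcb *\<^sub>v (Cdiag ls *\<^sub>v xb) + Ac *\<^sub>v xc + Hcd *\<^sub>v (Cdiag qs *\<^sub>v (Td qs Fdd *\<^sub>v xd)) + B0c *\<^sub>v (C0a *\<^sub>v xa + C0b *\<^sub>v xb + C0c *\<^sub>v xc + C0d *\<^sub>v (Td qs Fdd *\<^sub>v xd) + u0) + Bc *\<^sub>v uc) @\<^sub>v (Bdiag qs *\<^sub>v (Fda *\<^sub>v xa) + Bdiag qs *\<^sub>v (Fdb *\<^sub>v xb) + Bdiag qs *\<^sub>v (Fdc *\<^sub>v xc) + (Jdiag qs + Bdiag qs * Fp qs Fdd + H' * Cdiag qs) *\<^sub>v xd + (Ti * B0d) *\<^sub>v (C0a *\<^sub>v xa + C0b *\<^sub>v xb + C0c *\<^sub>v xc + C0d *\<^sub>v (Td qs Fdd *\<^sub>v xd) + u0) + Bdiag qs *\<^sub>v ud)"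
    proof -
      have e1: "(four_block_mat (1\<^sub>m (na+nb+nc)) (0\<^sub>m (na+nb+nc) (sum_list qs)) (0\<^sub>m (sum_list qs) (na+nb+nc)) (Ti) * A * four_block_mat (1\<^sub>m (na+nb+nc)) (0\<^sub>m (na+nb+nc) (sum_list qs)) (0\<^sub>m (sum_list qs) (na+nb+nc)) (Td qs Fdd)) *\<^sub>v (xa @\<^sub>v xb @\<^sub>v xc @\<^sub>v xd) = (four_block_mat (1\<^sub>m (na+nb+nc)) (0\<^sub>m (na+nb+nc) (sum_list qs)) (0\<^sub>m (sum_list qs) (na+nb+nc)) (Ti) * A) *\<^sub>v (four_block_mat (1\<^sub>m (na+nb+nc)) (0\<^sub>m (na+nb+nc) (sum_list qs)) (0\<^sub>m (sum_list qs) (na+nb+nc)) (Td qs Fdd) *\<^sub>v (xa @\<^sub>v xb @\<^sub>v xc @\<^sub>v xd))"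
        by (rule assoc_mult_mat_vec[OF TsiA Tsc xbc])
      have e2: "(four_block_mat (1\<^sub>m (na+nb+nc)) (0\<^sub>m (na+nb+nc) (sum_list qs)) (0\<^sub>m (sum_list qs) (na+nb+nc)) (Ti) * A) *\<^sub>v (four_block_mat (1\<^sub>m (na+nb+nc)) (0\<^sub>m (na+nb+nc) (sum_list qs)) (0\<^sub>m (sum_list qs) (na+nb+nc)) (Td qs Fdd) *\<^sub>v (xa @\<^sub>v xb @\<^sub>v xc @\<^sub>v xd)) = four_block_mat (1\<^sub>m (na+nb+nc)) (0\<^sub>m (na+nb+nc) (sum_list qs)) (0\<^sub>m (sum_list qs) (na+nb+nc)) (Ti) *\<^sub>v (A *\<^sub>v (four_block_mat (1\<^sub>m (na+nb+nc)) (0\<^sub>m (na+nb+nc) (sum_list qs)) (0\<^sub>m (sum_list qs) (na+nb+nc)) (Td qs Fdd) *\<^sub>v (xa @\<^sub>v xb @\<^sub>v xc @\<^sub>v xd)))"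
        by (rule assoc_mult_mat_vec[OF Tsic cA Tsxc])
      have e3: "(four_block_mat (1\<^sub>m (na+nb+nc)) (0\<^sub>m (na+nb+nc) (sum_list qs)) (0\<^sub>m (sum_list qs) (na+nb+nc)) (Ti) * B) *\<^sub>v (u0 @\<^sub>v ud @\<^sub>v uc) = four_block_mat (1\<^sub>m (na+nb+nc)) (0\<^sub>m (na+nb+nc) (sum_list qs)) (0\<^sub>m (sum_list qs) (na+nb+nc)) (Ti) *\<^sub>v (B *\<^sub>v (u0 @\<^sub>v ud @\<^sub>v uc))"
        by (rule assoc_mult_mat_vec[OF Tsic cB uc'])
      have e4: "four_block_mat (1\<^sub>m (na+nb+nc)) (0\<^sub>m (na+nb+nc) (sum_list qs)) (0\<^sub>m (sum_list qs) (na+nb+nc)) (Ti) *\<^sub>v (A *\<^sub>v (four_block_mat (1\<^sub>m (na+nb+nc)) (0\<^sub>m (na+nb+nc) (sum_list qs)) (0\<^sub>m (sum_list qs) (na+nb+nc)) (Td qs Fdd) *\<^sub>v (xa @\<^sub>v xb @\<^sub>v xc @\<^sub>v xd))) + four_block_mat (1\<^sub>m (na+nb+nc)) (0\<^sub>m (na+nb+nc) (sum_list qs)) (0\<^sub>m (sum_list qs) (na+nb+nc)) (Ti) *\<^sub>v (B *\<^sub>v (u0 @\<^sub>v ud @\<^sub>v uc)) = four_block_mat (1\<^sub>m (na+nb+nc)) (0\<^sub>m (na+nb+nc) (sum_list qs)) (0\<^sub>m (sum_list qs) (na+nb+nc)) (Ti) *\<^sub>v (A *\<^sub>v (four_block_mat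 (1\<^sub>m (na+nb+nc)) (0\<^sub>m (na+nb+nc) (sum_list qs)) (0\<^sub>m (sum_list qs) (na+nb+nc)) (Td qs Fdd) *\<^sub>v (xa @\<^sub>v xb @\<^sub>v xc @\<^sub>v xd)) + B *\<^sub>v (u0 @\<^sub>v ud @\<^sub>v uc))"
        by (rule mult_add_distrib_mat_vec[OF Tsic Axc Buc, symmetric])
      have "(four_block_mat (1\<^sub>m (na+nb+nc)) (0\<^sub>m (na+nb+nc) (sum_list qs)) (0\<^sub>m (sum_list qs) (na+nb+nc)) (Ti) * A * four_block_mat (1\<^sub>m (na+nb+nc)) (0\<^sub>m (na+nb+nc) (sum_list qs)) (0\<^sub>m (sum_list qs) (na+nb+nc)) (Td qs Fdd)) *\<^sub>v (xa @\<^sub>v xb @\<^sub>v xc @\<^sub>v xd) + (four_block_mat (1\<^sub>m (na+nb+nc)) (0\<^sub>m (na+nb+nc) (sum_list qs)) (0\<^sub>m (sum_list qs) (na+nb+nc)) (Ti) * B) *\<^sub>v (u0 @\<^sub>v ud @\<^sub>v uc) = four_block_mat (1\<^sub>m (na+nb+nc)) (0\<^sub>m (na+nb+nc) (sum_list qs)) (0\<^sub>m (sum_list qs) (na+nb+nc)) (Ti) *\<^sub>v (A *\<^sub>v (four_block_mat (1\<^sub>m (na+nb+nc)) (0\<^sub>m (na+nb+nc) (sum_list qs)) (0\<^sub>m (sum_list qs) (na+nb+nc)) (Td qs Fdd) *\<^sub>v (xa @\<^sub>v xb @\<^sub>v xc @\<^sub>v xd)) + B *\<^sub>v (u0 @\<^sub>v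 ud @\<^sub>v uc))"
        unfolding e1 e2 e3 e4 ..
      also have "A *\<^sub>v (four_block_mat (1\<^sub>m (na+nb+nc)) (0\<^sub>m (na+nb+nc) (sum_list qs)) (0\<^sub>m (sum_list qs) (na+nb+nc)) (Td qs Fdd) *\<^sub>v (xa @\<^sub>v xb @\<^sub>v xc @\<^sub>v xd)) + B *\<^sub>v (u0 @\<^sub>v ud @\<^sub>v uc) = (Aa *\<^sub>v xa + Hab *\<^sub>v (Cdiag ls *\<^sub>v xb) + Had *\<^sub>v (Cdiag qs *\<^sub>v (Td qs Fdd *\<^sub>v xd)) + B0a *\<^sub>v (C0a *\<^sub>v xa + C0b *\<^sub>v xb + C0c *\<^sub>v xc + C0d *\<^sub>v (Td qs Fdd *\<^sub>v xd) + u0)) @\<^sub>v ((Jdiag ls + Hbb * Cdiag ls) *\<^sub>v xb + Hbd *\<^sub>v (Cdiag qs *\<^sub>v (Td qs Fdd *\<^sub>v xd)) + B0b *\<^sub>v (C0a *\<^sub>v xa + C0b *\<^sub>v xb + C0c *\<^sub>v xc + C0d *\<^sub>v (Td qs Fdd *\<^sub>v xd) + u0)) @\<^sub>v (Bc *\<^sub>v (Fca *\<^sub>v xa) + Hcb *\<^sub>v (Cdiag ls *\<^sub>v xb) + Ac *\<^sub>v xc + Hcd *\<^sub>v (Cdiag qs *\<^sub>v (Td qs Fdd *\<^sub>v xd)) + B0c *\<^sub>v (C0a *\<^sub>v xa + C0b *\<^sub>v xb + C0c *\<^sub>v xc + C0d *\<^sub>v (Td qs Fdd *\<^sub>v xd)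 + u0) + Bc *\<^sub>v uc) @\<^sub>v (Bdiag qs *\<^sub>v (Fda *\<^sub>v xa) + Bdiag qs *\<^sub>v (Fdb *\<^sub>v xb) + Bdiag qs *\<^sub>v (Fdc *\<^sub>v xc) + (Jdiag qs + Bdiag qs * Fdd + Hdd * Cdiag qs) *\<^sub>v (Td qs Fdd *\<^sub>v xd) + B0d *\<^sub>v (C0a *\<^sub>v xa + C0b *\<^sub>v xb + C0c *\<^sub>v xc + C0d *\<^sub>v (Td qs Fdd *\<^sub>v xd) + u0) + Bdiag qs *\<^sub>v ud)"
        unfolding s2 by (rule conjunct2[OF E])
      also have "(Aa *\<^sub>v xa + Hab *\<^sub>v (Cdiag ls *\<^sub>v xb) + Had *\<^sub>v (Cdiag qs *\<^sub>v (Td qs Fdd *\<^sub>v xd)) + B0a *\<^sub>v (C0a *\<^sub>v xa + C0b *\<^sub>v xb + C0c *\<^sub>v xc + C0d *\<^sub>v (Td qs Fdd *\<^sub>v xd) + u0)) @\<^sub>v ((Jdiag ls + Hbb * Cdiag ls) *\<^sub>v xb + Hbd *\<^sub>v (Cdiag qs *\<^sub>v (Td qs Fdd *\<^sub>v xd)) + B0b *\<^sub>v (C0a *\<^sub>v xa + C0b *\<^sub>v xb + C0c *\<^sub>v xc + C0d *\<^sub>v (Td qs Fdd *\<^sub>v xd) + u0)) @\<^sub>v (Bc *\<^sub>v (Fca *\<^sub>v xa) + Hcb *\<^sub>v (Cdiag ls *\<^sub>v xb) + Ac *\<^sub>v xc + Hcd *\<^sub>v (Cdiag qs *\<^sub>v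 (Td qs Fdd *\<^sub>v xd)) + B0c *\<^sub>v (C0a *\<^sub>v xa + C0b *\<^sub>v xb + C0c *\<^sub>v xc + C0d *\<^sub>v (Td qs Fdd *\<^sub>v xd) + u0) + Bc *\<^sub>v uc) @\<^sub>v (Bdiag qs *\<^sub>v (Fda *\<^sub>v xa) + Bdiag qs *\<^sub>v (Fdb *\<^sub>v xb) + Bdiag qs *\<^sub>v (Fdc *\<^sub>v xc) + (Jdiag qs + Bdiag qs * Fdd + Hdd * Cdiag qs) *\<^sub>v (Td qs Fdd *\<^sub>v xd) + B0d *\<^sub>v (C0a *\<^sub>v xa + C0b *\<^sub>v xb + C0c *\<^sub>v xc + C0d *\<^sub>v (Td qs Fdd *\<^sub>v xd) + u0) + Bdiag qs *\<^sub>v ud) = ((Aa *\<^sub>v xa + Hab *\<^sub>v (Cdiag ls *\<^sub>v xb) + Had *\<^sub>v (Cdiag qs *\<^sub>v (Td qs Fdd *\<^sub>v xd)) + B0a *\<^sub>v (C0a *\<^sub>v xa + C0b *\<^sub>v xb + C0c *\<^sub>v xc + C0d *\<^sub>v (Td qs Fdd *\<^sub>v xd) + u0)) @\<^sub>v (((Jdiag ls + Hbb * Cdiag ls) *\<^sub>v xb + Hbd *\<^sub>v (Cdiag qs *\<^sub>v (Td qs Fdd *\<^sub>v xd)) + B0b *\<^sub>v (C0a *\<^sub>v xa + C0b *\<^sub>v xb + C0c *\<^sub>v xc + C0d *\<^sub>v (Td qs Fdd *\<^sub>v xd) + u0)) @\<^sub>v (Bc *\<^sub>v (Fca *\<^sub>v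 xa) + Hcb *\<^sub>v (Cdiag ls *\<^sub>v xb) + Ac *\<^sub>v xc + Hcd *\<^sub>v (Cdiag qs *\<^sub>v (Td qs Fdd *\<^sub>v xd)) + B0c *\<^sub>v (C0a *\<^sub>v xa + C0b *\<^sub>v xb + C0c *\<^sub>v xc + C0d *\<^sub>v (Td qs Fdd *\<^sub>v xd) + u0) + Bc *\<^sub>v uc))) @\<^sub>v (Bdiag qs *\<^sub>v (Fda *\<^sub>v xa) + Bdiag qs *\<^sub>v (Fdb *\<^sub>v xb) + Bdiag qs *\<^sub>v (Fdc *\<^sub>v xc) + (Jdiag qs + Bdiag qs * Fdd + Hdd * Cdiag qs) *\<^sub>v (Td qs Fdd *\<^sub>v xd) + B0d *\<^sub>v (C0a *\<^sub>v xa + C0b *\<^sub>v xb + C0c *\<^sub>v xc + C0d *\<^sub>v (Td qs Fdd *\<^sub>v xd) + u0) + Bdiag qs *\<^sub>v ud)"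
        by (rule app3(1)[OF P1c P2c P3c])
      also have "four_block_mat (1\<^sub>m (na+nb+nc)) (0\<^sub>m (na+nb+nc) (sum_list qs)) (0\<^sub>m (sum_list qs) (na+nb+nc)) (Ti) *\<^sub>v (((Aa *\<^sub>v xa + Hab *\<^sub>v (Cdiag ls *\<^sub>v xb) + Had *\<^sub>v (Cdiag qs *\<^sub>v (Td qs Fdd *\<^sub>v xd)) + B0a *\<^sub>v (C0a *\<^sub>v xa + C0b *\<^sub>v xb + C0c *\<^sub>v xc + C0d *\<^sub>v (Td qs Fdd *\<^sub>v xd) + u0)) @\<^sub>v (((Jdiag ls + Hbb * Cdiag ls) *\<^sub>v xb + Hbd *\<^sub>v (Cdiag qs *\<^sub>v (Td qs Fdd *\<^sub>v xd)) + B0b *\<^sub>v (C0a *\<^sub>v xa + C0b *\<^sub>v xb + C0c *\<^sub>v xc + C0d *\<^sub>v (Td qs Fdd *\<^sub>v xd) + u0)) @\<^sub>v (Bc *\<^sub>v (Fca *\<^sub>v xa) + Hcb *\<^sub>v (Cdiag ls *\<^sub>v xb) + Ac *\<^sub>v xc + Hcd *\<^sub>v (Cdiag qs *\<^sub>v (Td qs Fdd *\<^sub>v xd)) + B0c *\<^sub>v (C0a *\<^sub>v xa + C0b *\<^sub>v xb + C0c *\<^sub>v xc + C0d *\<^sub>v (Td qs Fdd *\<^sub>v xd) + u0) + Bc *\<^sub>v uc))) @\<^sub>v (Bdiag qs *\<^sub>v (Fda *\<^sub>v xa) + Bdiag qs *\<^sub>v (Fdb *\<^sub>v xb) + Bdiag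 qs *\<^sub>v (Fdc *\<^sub>v xc) + (Jdiag qs + Bdiag qs * Fdd + Hdd * Cdiag qs) *\<^sub>v (Td qs Fdd *\<^sub>v xd) + B0d *\<^sub>v (C0a *\<^sub>v xa + C0b *\<^sub>v xb + C0c *\<^sub>v xc + C0d *\<^sub>v (Td qs Fdd *\<^sub>v xd) + u0) + Bdiag qs *\<^sub>v ud)) = ((Aa *\<^sub>v xa + Hab *\<^sub>v (Cdiag ls *\<^sub>v xb) + Had *\<^sub>v (Cdiag qs *\<^sub>v (Td qs Fdd *\<^sub>v xd)) + B0a *\<^sub>v (C0a *\<^sub>v xa + C0b *\<^sub>v xb + C0c *\<^sub>v xc + C0d *\<^sub>v (Td qs Fdd *\<^sub>v xd) + u0)) @\<^sub>v (((Jdiag ls + Hbb * Cdiag ls) *\<^sub>v xb + Hbd *\<^sub>v (Cdiag qs *\<^sub>v (Td qs Fdd *\<^sub>v xd)) + B0b *\<^sub>v (C0a *\<^sub>v xa + C0b *\<^sub>v xb + C0c *\<^sub>v xc + C0d *\<^sub>v (Td qs Fdd *\<^sub>v xd) + u0)) @\<^sub>v (Bc *\<^sub>v (Fca *\<^sub>v xa) + Hcb *\<^sub>v (Cdiag ls *\<^sub>v xb) + Ac *\<^sub>v xc + Hcd *\<^sub>v (Cdiag qs *\<^sub>v (Td qs Fdd *\<^sub>v xd)) + B0c *\<^sub>v (C0a *\<^sub>v xa + C0b *\<^sub>v xb + C0c *\<^sub>v xc + C0d *\<^sub>v (Td qs Fdd *\<^sub>v xd) + u0) + Bc *\<^sub>v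 uc))) @\<^sub>v (Ti *\<^sub>v (Bdiag qs *\<^sub>v (Fda *\<^sub>v xa) + Bdiag qs *\<^sub>v (Fdb *\<^sub>v xb) + Bdiag qs *\<^sub>v (Fdc *\<^sub>v xc) + (Jdiag qs + Bdiag qs * Fdd + Hdd * Cdiag qs) *\<^sub>v (Td qs Fdd *\<^sub>v xd) + B0d *\<^sub>v (C0a *\<^sub>v xa + C0b *\<^sub>v xb + C0c *\<^sub>v xc + C0d *\<^sub>v (Td qs Fdd *\<^sub>v xd) + u0) + Bdiag qs *\<^sub>v ud))"
        by (rule Ts_vec[OF tr(1) app3(2)[OF P1c P2c P3c] P4c])
      also have "\<dots> = (Aa *\<^sub>v xa + Hab *\<^sub>v (Cdiag ls *\<^sub>v xb) + Had *\<^sub>v (Cdiag qs *\<^sub>v (Td qs Fdd *\<^sub>v xd)) + B0a *\<^sub>v (C0a *\<^sub>v xa + C0b *\<^sub>v xb + C0c *\<^sub>v xc + C0d *\<^sub>v (Td qs Fdd *\<^sub>v xd) + u0)) @\<^sub>v ((Jdiag ls + Hbb * Cdiag ls) *\<^sub>v xb + Hbd *\<^sub>v (Cdiag qs *\<^sub>v (Td qs Fdd *\<^sub>v xd)) + B0b *\<^sub>v (C0a *\<^sub>v xa + C0b *\<^sub>v xb + C0c *\<^sub>v xc + C0d *\<^sub>v (Td qs Fdd *\<^sub>v xd) + u0)) @\<^sub>v (Bc *\<^sub>v (Fca *\<^sub>v xa) + Hcb *\<^sub>v (Cdiag ls *\<^sub>v xb) + Ac *\<^sub>v xc + Hcd *\<^sub>v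 (Cdiag qs *\<^sub>v (Td qs Fdd *\<^sub>v xd)) + B0c *\<^sub>v (C0a *\<^sub>v xa + C0b *\<^sub>v xb + C0c *\<^sub>v xc + C0d *\<^sub>v (Td qs Fdd *\<^sub>v xd) + u0) + Bc *\<^sub>v uc) @\<^sub>v (Ti *\<^sub>v (Bdiag qs *\<^sub>v (Fda *\<^sub>v xa) + Bdiag qs *\<^sub>v (Fdb *\<^sub>v xb) + Bdiag qs *\<^sub>v (Fdc *\<^sub>v xc) + (Jdiag qs + Bdiag qs * Fdd + Hdd * Cdiag qs) *\<^sub>v (Td qs Fdd *\<^sub>v xd) + B0d *\<^sub>v (C0a *\<^sub>v xa + C0b *\<^sub>v xb + C0c *\<^sub>v xc + C0d *\<^sub>v (Td qs Fdd *\<^sub>v xd) + u0) + Bdiag qs *\<^sub>v ud))"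
        by (rule app3(1)[OF P1c P2c P3c, symmetric])
      finally show ?thesis unfolding s5 .
    qed
    have g1: "(C * four_block_mat (1\<^sub>m (na+nb+nc)) (0\<^sub>m (na+nb+nc) (sum_list qs)) (0\<^sub>m (sum_list qs) (na+nb+nc)) (Td qs Fdd)) *\<^sub>v (xa @\<^sub>v xb @\<^sub>v xc @\<^sub>v xd) + D *\<^sub>v (u0 @\<^sub>v ud @\<^sub>v uc) = (C0a *\<^sub>v xa + C0b *\<^sub>v xb + C0c *\<^sub>v xc + C0d *\<^sub>v (Td qs Fdd *\<^sub>v xd) + u0) @\<^sub>v (Cdiag qs *\<^sub>v (Td qs Fdd *\<^sub>v xd)) @\<^sub>v (Cdiag ls *\<^sub>v xb)"
    proof -
      have "(C * four_block_mat (1\<^sub>m (na+nb+nc)) (0\<^sub>m (na+nb+nc) (sum_list qs)) (0\<^sub>m (sum_list qs) (na+nb+nc)) (Td qs Fdd)) *\<^sub>v (xa @\<^sub>v xb @\<^sub>v xc @\<^sub>v xd) = C *\<^sub>v (four_block_mat (1\<^sub>m (na+nb+nc)) (0\<^sub>m (na+nb+nc) (sum_list qs)) (0\<^sub>m (sum_list qs) (na+nb+nc)) (Td qs Fdd) *\<^sub>v (xa @\<^sub>v xb @\<^sub>v xc @\<^sub>v xd))"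
        by (rule assoc_mult_mat_vec[OF cC Tsc xbc])
      then show ?thesis unfolding s2 using conjunct1[OF E] by (simp only:)
    qed
    show "(four_block_mat (1\<^sub>m (na+nb+nc)) (0\<^sub>m (na+nb+nc) (sum_list qs)) (0\<^sub>m (sum_list qs) (na+nb+nc)) (Ti) * A * four_block_mat (1\<^sub>m (na+nb+nc)) (0\<^sub>m (na+nb+nc) (sum_list qs)) (0\<^sub>m (sum_list qs) (na+nb+nc)) (Td qs Fdd)) *\<^sub>v (xa @\<^sub>v xb @\<^sub>v xc @\<^sub>v xd) + (four_block_mat (1\<^sub>m (na+nb+nc)) (0\<^sub>m (na+nb+nc) (sum_list qs)) (0\<^sub>m (sum_list qs) (na+nb+nc)) (Ti) * B) *\<^sub>v (u0 @\<^sub>v ud @\<^sub>v uc) = (Aa *\<^sub>v xa + Hab *\<^sub>v (Cdiag ls *\<^sub>v xb) + Had *\<^sub>v (Cdiag qs *\<^sub>v xd) + B0a *\<^sub>v (C0a *\<^sub>v xa + C0b *\<^sub>v xb + C0c *\<^sub>v xc + (C0d * Td qs Fdd) *\<^sub>v xd + u0)) @\<^sub>v ((Jdiag ls + Hbb * Cdiag ls) *\<^sub>v xb + Hbd *\<^sub>v (Cdiag qs *\<^sub>v xd) + B0b *\<^sub>v (C0a *\<^sub>v xa + C0b *\<^sub>v xb + C0c *\<^sub>v xc + (C0d * Td qs Fdd) *\<^sub>v xd + u0)) @\<^sub>v (Bc *\<^sub>v (Fca *\<^sub>v xa) + Hcb *\<^sub>v (Cdiag ls *\<^sub>v xb) +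 Ac *\<^sub>v xc + Hcd *\<^sub>v (Cdiag qs *\<^sub>v xd) + B0c *\<^sub>v (C0a *\<^sub>v xa + C0b *\<^sub>v xb + C0c *\<^sub>v xc + (C0d * Td qs Fdd) *\<^sub>v xd + u0) + Bc *\<^sub>v uc) @\<^sub>v (Bdiag qs *\<^sub>v (Fda *\<^sub>v xa) + Bdiag qs *\<^sub>v (Fdb *\<^sub>v xb) + Bdiag qs *\<^sub>v (Fdc *\<^sub>v xc) + (Jdiag qs + Bdiag qs * Fp qs Fdd + H' * Cdiag qs) *\<^sub>v xd + (Ti * B0d) *\<^sub>v (C0a *\<^sub>v xa + C0b *\<^sub>v xb + C0c *\<^sub>v xc + (C0d * Td qs Fdd) *\<^sub>v xd + u0) + Bdiag qs *\<^sub>v ud) \<and>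
         (C * four_block_mat (1\<^sub>m (na+nb+nc)) (0\<^sub>m (na+nb+nc) (sum_list qs)) (0\<^sub>m (sum_list qs) (na+nb+nc)) (Td qs Fdd)) *\<^sub>v (xa @\<^sub>v xb @\<^sub>v xc @\<^sub>v xd) + D *\<^sub>v (u0 @\<^sub>v ud @\<^sub>v uc) = (C0a *\<^sub>v xa + C0b *\<^sub>v xb + C0c *\<^sub>v xc + (C0d * Td qs Fdd) *\<^sub>v xd + u0) @\<^sub>v (Cdiag qs *\<^sub>v xd) @\<^sub>v (Cdiag ls *\<^sub>v xb)"
      using g1 g2 unfolding cd y0eq by blast
  qed
  have c1: "four_block_mat (1\<^sub>m (na+nb+nc)) (0\<^sub>m (na+nb+nc) (sum_list qs)) (0\<^sub>m (sum_list qs) (na+nb+nc)) (Ti) * A * four_block_mat (1\<^sub>m (na+nb+nc)) (0\<^sub>m (na+nb+nc) (sum_list qs)) (0\<^sub>m (sum_list qs) (na+nb+nc)) (Td qs Fdd) \<in> carrier_mat (na+nb+nc+sum_list qs) (na+nb+nc+sum_list qs)"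
    by (rule mult_carrier_mat[OF mult_carrier_mat[OF Tsic cA] Tsc])
  have c2: "four_block_mat (1\<^sub>m (na+nb+nc)) (0\<^sub>m (na+nb+nc) (sum_list qs)) (0\<^sub>m (sum_list qs) (na+nb+nc)) (Ti) * B \<in> carrier_mat (na+nb+nc+sum_list qs) (m0+length qs+mc)"
    by (rule mult_carrier_mat[OF Tsic cB])
  have c3: "C * four_block_mat (1\<^sub>m (na+nb+nc)) (0\<^sub>m (na+nb+nc) (sum_list qs)) (0\<^sub>m (sum_list qs) (na+nb+nc)) (Td qs Fdd) \<in> carrier_mat (m0+length qs+pb) (na+nb+nc+sum_list qs)"
    by (rule mult_carrier_mat[OF cC Tsc])
  have c4: "C0d * Td qs Fdd \<in> carrier_mat m0 (sum_list qs)" by (rule mult_carrier_mat[OF wc(4) Tc])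
  have c5: "Ti * B0d \<in> carrier_mat (sum_list qs) m0" by (rule mult_carrier_mat[OF tr(1) wc(22)])
  have newscb: "is_SCB (four_block_mat (1\<^sub>m (na+nb+nc)) (0\<^sub>m (na+nb+nc) (sum_list qs)) (0\<^sub>m (sum_list qs) (na+nb+nc)) (Ti) * A * four_block_mat (1\<^sub>m (na+nb+nc)) (0\<^sub>m (na+nb+nc) (sum_list qs)) (0\<^sub>m (sum_list qs) (na+nb+nc)) (Td qs Fdd)) (four_block_mat (1\<^sub>m (na+nb+nc)) (0\<^sub>m (na+nb+nc) (sum_list qs)) (0\<^sub>m (sum_list qs) (na+nb+nc)) (Ti) * B) (C * four_block_mat (1\<^sub>m (na+nb+nc)) (0\<^sub>m (na+nb+nc) (sum_list qs)) (0\<^sub>m (sum_list qs) (na+nb+nc)) (Td qs Fdd)) D na nb nc (sum_list qs) m0 (length qs) mc pb ls qs (Fp qs Fdd)"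
    unfolding is_SCB_def
    apply (intro conjI)
    prefer 13
    apply (rule exI[of _ C0a], rule exI[of _ C0b], rule exI[of _ C0c], rule exI[of _ "C0d * Td qs Fdd"], rule exI[of _ Aa], rule exI[of _ Hab], rule exI[of _ Had], rule exI[of _ B0a], rule exI[of _ Hbb], rule exI[of _ Hbd], rule exI[of _ B0b], rule exI[of _ Fca], rule exI[of _ Hcb], rule exI[of _ Ac], rule exI[of _ Hcd], rule exI[of _ B0c], rule exI[of _ Bc], rule exI[of _ Fda], rule exI[of _ Fdb], rule exI[of _ Fdc], rule exI[of _ H'], rule exI[of _ "Ti * B0d"])
    apply (intro conjI)
    prefer 23
    subgoal unfolding Let_def using key by blast
    apply (simp_all only: wc tr(2) c1 c2 c3 c4 c5 cD Fpc basic)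
    apply simp_all
    using basic(2) basic(5) by auto
  show ?thesis
    apply (rule exI[of _ "Td qs Fdd"], rule exI[of _ Ti])
    unfolding Let_def using Tc tr newscb by blast
qed

theorem lemma2_final:
  fixes A B C D Fdd :: "real mat"
    and na nb nc nd m0 md mc pb :: nat
    and ls qs :: "nat list"
  assumes scb: "is_SCB A B C D na nb nc nd m0 md mc pb ls qs Fdd"
  shows "\<exists>Td Tdi. Td \<in> carrier_mat nd nd \<and> Tdi \<in> carrier_mat nd nd \<and>
           Td * Tdi = 1\<^sub>m nd \<and> Tdi * Td = 1\<^sub>m nd \<and>
           (let Ts = four_block_mat (1\<^sub>m (na+nb+nc)) (0\<^sub>m (na+nb+nc) nd) (0\<^sub>m nd (na+nb+nc)) Td;
                Tsi = four_block_mat (1\<^sub>m (na+nb+nc)) (0\<^sub>m (na+nb+nc) nd) (0\<^sub>m nd (na+nb+nc)) Tdi in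
            \<exists>Fdd'. is_SCB (Tsi * A * Ts) (Tsi * B) (C * Ts) D na nb nc nd m0 md mc pb ls qs Fdd'
                   \<and> Fdd_structured qs Fdd') \<and>
           Cdiag qs * Td = Cdiag qs \<and> Tdi * Bdiag qs = Bdiag qs"
proof -
  have e: "nd = sum_list qs" "md = length qs" using SCB_basic[OF scb] by auto
  have scb': "is_SCB A B C D na nb nc (sum_list qs) m0 (length qs) mc pb ls qs Fdd"
    using scb unfolding e .
  show ?thesis unfolding e by (rule aux[OF scb'])
qed

theorem lemma2:
  fixes A B C D Fdd :: "real mat"
    and na nb nc nd m0 md mc pb :: nat
    and ls qs :: "nat list"
  assumes scb: "is_SCB A B C D na nb nc nd m0 md mc pb ls qs Fdd"
    and rankD: "mat_rank D = m0"
    and rankBD: "full_rank (four_block_mat B (0\<^sub>m (na+nb+nc+nd) 0) D (0\<^sub>m (m0+md+pb) 0))"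
    and rankCD: "full_rank (four_block_mat C D (0\<^sub>m 0 (na+nb+nc+nd)) (0\<^sub>m 0 (m0+md+mc)))"
  shows "\<exists>Td Tdi. Td \<in> carrier_mat nd nd \<and> Tdi \<in> carrier_mat nd nd \<and>
           Td * Tdi = 1\<^sub>m nd \<and> Tdi * Td = 1\<^sub>m nd \<and>
           (let Ts = four_block_mat (1\<^sub>m (na+nb+nc)) (0\<^sub>m (na+nb+nc) nd) (0\<^sub>m nd (na+nb+nc)) Td;
                Tsi = four_block_mat (1\<^sub>m (na+nb+nc)) (0\<^sub>m (na+nb+nc) nd) (0\<^sub>m nd (na+nb+nc)) Tdi in
            \<exists>Fdd'. is_SCB (Tsi * A * Ts) (Tsi * B) (C * Ts) D na nb nc nd m0 md mc pb ls qs Fdd'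
                   \<and> Fdd_structured qs Fdd') \<and>
           Cdiag qs * Td = Cdiag qs \<and> Tdi * Bdiag qs = Bdiag qs"
  using lemma2_final[OF scb] .

end
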